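(* Let $L,\rho_1,\rho_2,\kappa,b,k_0,\ell>0$ and $\gamma_1,\gamma_2,\gamma_3>0$ be constants and let $\mathcal{H}$, $\mathcal{A}$, $\mathcal{D}(\mathcal{A})$ be as in the context. Let $\lambda\in\mathbb{R}$, $F=(f_1,\dots,f_6)\in\mathcal{H}$, and $U=(\varphi,\psi,w,\Phi,\Psi,W)\in\mathcal{D}(\mathcal{A})$ with $(i\lambda I-\mathcal{A})U=F$, i.e. $i\lambda\varphi-\Phi=f_1$, $i\lambda\psi-\Psi=f_2$, $i\lambda w-W=f_3$, $i\lambda\rho_1\Phi-\kappa(\varphi_x+\psi+\ell w)_x-k_0\ell(w_x-\ell\varphi)=\rho_1 f_4$, $i\lambda\rho_2\Psi-b\psi_{xx}+\kappa(\varphi_x+\psi+\ell w)=\rho_2 f_5$, $i\lambda\rho_1 W-k_0(w_x-\ell\varphi)_x+\kappa\ell(\varphi_x+\psi+\ell w)=\rho_1 f_6$. Set $\mathcal{I}_\varphi=\rho_1|\Phi|^2+\kappa|\varphi_x|^2$, $\mathcal{I}_\psi=\rho_2|\Psi|^2+b|\psi_x|^2$, $\mathcal{I}_w=\rho_1|W|^2+k_0|w_x|^2$ (functions of $x\in[0,L]$). Let $q\in H^1(0,L)$ (real-valued). Then $\int_0^L q'\mathcal{I}_\varphi\,dx=\big[q\mathcal{I}_\varphi\big]_0^L-\big[k_0\ell^2 q|\varphi|^2\big]_0^L+2\kappa\,\mathrm{Re}\int_0^L q\psi_x\overline{\varphi_x}\,dx+k_0\ell^2\int_0^L q'|\varphi|^2\,dx+2(\kappa+k_0)\ell\,\mathrm{Re}\int_0^L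 q w_x\overline{\varphi_x}\,dx+R_1,$ $\int_0^L q'\mathcal{I}_\psi\,dx=\big[q\mathcal{I}_\psi\big]_0^L-\big[\kappa q|\psi|^2\big]_0^L-2\kappa\,\mathrm{Re}\int_0^L q\varphi_x\overline{\psi_x}\,dx+\kappa\int_0^L q'|\psi|^2\,dx-2\kappa\ell\,\mathrm{Re}\int_0^L q w\overline{\psi_x}\,dx+R_2,$ $\int_0^L q'\mathcal{I}_w\,dx=\big[q\mathcal{I}_w\big]_0^L-\big[\kappa\ell^2 q|w|^2\big]_0^L-2\kappa\ell\,\mathrm{Re}\int_0^L q\psi\overline{w_x}\,dx-2(\kappa+k_0)\ell\,\mathrm{Re}\int_0^L q\varphi_x\overline{w_x}\,dx+\kappa\ell^2\int_0^L q'|w|^2\,dx+R_3,$ where the remainders satisfy $|R_i|\le C\|U\|_{\mathcal{H}}\|F\|_{\mathcal{H}}$, $i=1,2,3$, for a positive constant $C$ independent of $\lambda$, $U$ and $F$.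
   Context: Let $H^1_L(0,L)=\{\phi\in H^1(0,L):\ \phi(L)=0\}$ (complex-valued functions), and let $\|\cdot\|$ denote the $L^2(0,L)$ norm. Let $\mathcal{H}=[H^1_L(0,L)]^3\times[L^2(0,L)]^3$, whose elements are written $U=(\varphi,\psi,w,\Phi,\Psi,W)$, equipped with the Hilbert norm $\|U\|_{\mathcal{H}}^2=\kappa\|\varphi_x+\psi+\ell w\|^2+\rho_1\|\Phi\|^2+b\|\psi_x\|^2+\rho_2\|\Psi\|^2+\rho_1\|W\|^2+k_0\|w_x-\ell\varphi\|^2$. Define $\mathcal{D}(\mathcal{A})=\{U\in\mathcal{H}:\ \varphi,\psi,w\in H^2(0,L),\ \Phi,\Psi,W\in H^1_L(0,L),\ \kappa(\varphi_x+\psi+\ell w)(0)=\gamma_1\Phi(0),\ b\psi_x(0)=\gamma_2\Psi(0),\ k_0(w_x-\ell\varphi)(0)=\gamma_3 W(0)\}$ and $\mathcal{A}U=\Big(\Phi,\ \Psi,\ W,\ \tfrac{\kappa}{\rho_1}(\varphi_x+\psi+\ell w)_x+\tfrac{k_0\ell}{\rho_1}(w_x-\ell\varphi),\ \tfrac{b}{\rho_2}\psi_{xx}-\tfrac{\kappa}{\rho_2}(\varphi_x+\psi+\ell w),\ \tfrac{k_0}{\rho_1}(w_x-\ell\varphi)_x-\tfrac{\kappa\ell}{\rho_1}(\varphi_x+\psi+\ell w)\Big)$. The notation $[g]_0^L$ means $g(L)-g(0)$. *)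

theory Defs
  imports "HOL-Analysis.Analysis"
begin

text \<open>Square integrability on the interval [0,L] (for functions into a Euclidean space,
  e.g. real or complex).  On a bounded interval an L2 function is also L1.\<close>
definition sqint :: "real \<Rightarrow> (real \<Rightarrow> 'a::euclidean_space) \<Rightarrow> bool" where
  "sqint L g \<longleftrightarrow> g absolutely_integrable_on {0..L} \<and>
                  (\<lambda>x. (norm (g x))^2) integrable_on {0..L}"

text \<open>f belongs to H^1(0,L) with weak derivative f' (f is taken as its absolutely continuous
  representative on [0,L]).\<close>
definition H1 :: "real \<Rightarrow> (real \<Rightarrow> 'a::euclidean_space) \<Rightarrow> (real \<Rightarrow> 'a) \<Rightarrow> bool" where
  "H1 L f f' \<longleftrightarrow> sqint L f' \<and> (\<forall>x\<in>{0..L}. f x = f 0 + integral {0..x} f')"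

definition H1L :: "real \<Rightarrow> (real \<Rightarrow> 'a::euclidean_space) \<Rightarrow> (real \<Rightarrow> 'a) \<Rightarrow> bool" where
  "H1L L f f' \<longleftrightarrow> H1 L f f' \<and> f L = 0"

definition H2 :: "real \<Rightarrow> (real \<Rightarrow> 'a::euclidean_space) \<Rightarrow> (real \<Rightarrow> 'a) \<Rightarrow> (real \<Rightarrow> 'a) \<Rightarrow> bool" where
  "H2 L f f' f'' \<longleftrightarrow> H1 L f f' \<and> H1 L f' f''"

definition L2sq :: "real \<Rightarrow> (real \<Rightarrow> complex) \<Rightarrow> real" where
  "L2sq L g = integral {0..L} (\<lambda>x. (cmod (g x))^2)"

definition Hnorm ::
  "real \<Rightarrow> real \<Rightarrow> real \<Rightarrow> real \<Rightarrow> real \<Rightarrow> real \<Rightarrow> real \<Rightarrow>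
   (real \<Rightarrow> complex) \<Rightarrow> (real \<Rightarrow> complex) \<Rightarrow> (real \<Rightarrow> complex) \<Rightarrow> (real \<Rightarrow> complex) \<Rightarrow>
   (real \<Rightarrow> complex) \<Rightarrow> (real \<Rightarrow> complex) \<Rightarrow>
   (real \<Rightarrow> complex) \<Rightarrow> (real \<Rightarrow> complex) \<Rightarrow> (real \<Rightarrow> complex) \<Rightarrow> real" where
  "Hnorm L \<kappa> \<rho>\<^sub>1 b \<rho>\<^sub>2 k\<^sub>0 l u1 du1 u2 du2 u3 du3 v1 v2 v3 =
     sqrt (\<kappa> * L2sq L (\<lambda>x. du1 x + u2 x + of_real l * u3 x)
         + \<rho>\<^sub>1 * L2sq L v1 + b * L2sq L du2 + \<rho>\<^sub>2 * L2sq L v2 + \<rho>\<^sub>1 * L2sq L v3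
         + k\<^sub>0 * L2sq L (\<lambda>x. du3 x - of_real l * u1 x))"

definition bracket :: "real \<Rightarrow> (real \<Rightarrow> real) \<Rightarrow> real" where
  "bracket L g = g L - g 0"

definition dens :: "real \<Rightarrow> real \<Rightarrow> (real \<Rightarrow> complex) \<Rightarrow> (real \<Rightarrow> complex) \<Rightarrow> real \<Rightarrow> real" where
  "dens \<rho> c V du x = \<rho> * (cmod (V x))^2 + c * (cmod (du x))^2"

end

theory Submission
  imports Defs "HOL-Analysis.Analysis"
begin

lemma id_meas_leb[measurable]: "(\<lambda>x::real. x) \<in> borel_measurable (lebesgue_on {a..b})"
  by (rule continuous_imp_measurable_on_sets_lebesgue) (auto intro: continuous_intros)

lemma core_fubini:
  fixes f g :: "real \<Rightarrow> complex"
  assumes f: "integrable (lebesgue_on {a..b}) f" and g: "integrable (lebesgue_on {a..b}) g"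
  shows "(\<integral>x. f x * (\<integral>t. (if t \<le> x then g t else 0) \<partial>lebesgue_on {a..b}) \<partial>lebesgue_on {a..b})
       = (\<integral>t. g t * (\<integral>x. (if t \<le> x then f x else 0) \<partial>lebesgue_on {a..b}) \<partial>lebesgue_on {a..b})"
proof -
  let ?M = "lebesgue_on {a..b}"
  interpret M: finite_measure ?M by (rule finite_measure_lebesgue_on) auto
  interpret P: pair_sigma_finite ?M ?M ..
  have fm[measurable]: "f \<in> borel_measurable ?M" using f by (rule borel_measurable_integrable)
  have gm[measurable]: "g \<in> borel_measurable ?M" using g by (rule borel_measurable_integrable)
  define h where "h = (\<lambda>x t. if t \<le> x then f x * g t else 0)"
  have hm[measurable]: "case_prod h \<in> borel_measurable (?M \<Otimes>\<^sub>M ?M)"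
    unfolding h_def by measurable
  have hx: "\<And>x. integrable ?M (\<lambda>y. h x y)"
    by (rule Bochner_Integration.integrable_bound[of _ "\<lambda>y. f x * g y" for x]) (use g in \<open>auto simp: h_def\<close>)
  have hi: "integrable (?M \<Otimes>\<^sub>M ?M) (case_prod h)"
  proof (rule P.Fubini_integrable)
    show "case_prod h \<in> borel_measurable (?M \<Otimes>\<^sub>M ?M)" by (rule hm)
    have "integrable ?M (\<lambda>x. \<integral>y. norm (h x y) \<partial>?M)"
    proof (rule Bochner_Integration.integrable_bound[where f="\<lambda>x. norm (f x) * (\<integral>y. norm (g y) \<partial>?M)"])
      show "integrable ?M (\<lambda>x. norm (f x) * (\<integral>y. norm (g y) \<partial>?M))"
        using f by auto
      show "(\<lambda>x. \<integral>y. norm (h x y) \<partial>?M) \<in> borel_measurable ?M"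
        by measurable
      show "AE x in ?M. norm (\<integral>y. norm (h x y) \<partial>?M) \<le> norm (norm (f x) * (\<integral>y. norm (g y) \<partial>?M))"
      proof (rule AE_I2)
        fix x
        have "(\<integral>y. norm (h x y) \<partial>?M) \<le> (\<integral>y. norm (f x) * norm (g y) \<partial>?M)"
          by (rule integral_mono) (use g hx[of x] in \<open>auto simp: h_def norm_mult\<close>)
        moreover have "0 \<le> (\<integral>y. norm (h x y) \<partial>?M)" by auto
        ultimately show "norm (\<integral>y. norm (h x y) \<partial>?M) \<le> norm (norm (f x) * (\<integral>y. norm (g y) \<partial>?M))"
          by auto
      qed
    qed
    then show "integrable ?M (\<lambda>x. \<integral>y. norm (case_prod h (x, y)) \<partial>?M)" by simp
    show "AE x in ?M. integrable ?M (\<lambda>y. case_prod h (x, y))"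
    proof (rule AE_I2)
      fix x
      show "integrable ?M (\<lambda>y. case_prod h (x, y))"
        using hx by simp
    qed
  qed
  have "(\<integral>t. (\<integral>x. h x t \<partial>?M) \<partial>?M) = (\<integral>x. (\<integral>t. h x t \<partial>?M) \<partial>?M)"
    by (rule P.Fubini_integral[OF hi])
  moreover have "\<And>x. (\<integral>t. h x t \<partial>?M) = f x * (\<integral>t. (if t \<le> x then g t else 0) \<partial>?M)"
  proof -
    fix x
    have "(\<integral>t. h x t \<partial>?M) = (\<integral>t. f x * (if t \<le> x then g t else 0) \<partial>?M)"
      by (rule Bochner_Integration.integral_cong) (auto simp: h_def)
    then show "(\<integral>t. h x t \<partial>?M) = f x * (\<integral>t. (if t \<le> x then g t else 0) \<partial>?M)" by simp
  qed
  moreover have "\<And>t. (\<integral>x. h x t \<partial>?M) = g t * (\<integral>x. (if t \<le> x then f x else 0) \<partial>?M)"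
  proof -
    fix t
    have "(\<integral>x. h x t \<partial>?M) = (\<integral>x. g t * (if t \<le> x then f x else 0) \<partial>?M)"
      by (rule Bochner_Integration.integral_cong) (auto simp: h_def)
    then show "(\<integral>x. h x t \<partial>?M) = g t * (\<integral>x. (if t \<le> x then f x else 0) \<partial>?M)" by simp
  qed
  ultimately show ?thesis by simp
qed

abbreviation "LM L \<equiv> lebesgue_on {0..L::real}"

definition cum :: "real \<Rightarrow> (real \<Rightarrow> complex) \<Rightarrow> real \<Rightarrow> complex" where
  "cum L f x = (\<integral>t. (if t \<le> x then f t else 0) \<partial>LM L)"

lemma cum_integrable:
  fixes f :: "real \<Rightarrow> complex"
  shows "integrable (LM L) f \<Longrightarrow> integrable (LM L) (\<lambda>t. if t \<le> x then f t else 0)"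
  by (rule Bochner_Integration.integrable_bound[of _ f]) (auto simp: borel_measurable_integrable)

lemma cum_meas[measurable]:
  assumes "integrable (LM L) f" shows "cum L f \<in> borel_measurable (LM L)"
proof -
  interpret M: finite_measure "LM L" by (rule finite_measure_lebesgue_on) auto
  interpret P: pair_sigma_finite "LM L" "LM L" ..
  have [measurable]: "f \<in> borel_measurable (LM L)" using assms by (rule borel_measurable_integrable)
  show ?thesis unfolding cum_def by measurable
qed

lemma cum_bound:
  assumes "integrable (LM L) f" shows "norm (cum L f x) \<le> (\<integral>t. norm (f t) \<partial>LM L)"
proof -
  have "norm (cum L f x) \<le> (\<integral>t. norm (if t \<le> x then f t else 0) \<partial>LM L)"
    unfolding cum_def by (rule integral_norm_bound)
  also have "\<dots> \<le> (\<integral>t. norm (f t) \<partial>LM L)"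
    by (rule integral_mono) (use assms cum_integrable[OF assms] in auto)
  finally show ?thesis .
qed

lemma integrable_mult_cum:
  assumes f: "integrable (LM L) f" and g: "integrable (LM L) g"
  shows "integrable (LM L) (\<lambda>x. g x * cum L f x)"
proof (rule Bochner_Integration.integrable_bound[where f="\<lambda>x. g x * (\<integral>t. norm (f t) \<partial>LM L)"])
  show "integrable (LM L) (\<lambda>x. g x * complex_of_real (\<integral>t. norm (f t) \<partial>LM L))"
    using g by auto
  show "(\<lambda>x. g x * cum L f x) \<in> borel_measurable (LM L)"
    using f g by measurable
  show "AE x in LM L. norm (g x * cum L f x) \<le> norm (g x * complex_of_real (\<integral>t. norm (f t) \<partial>LM L))"
  proof (rule AE_I2)
    fix x
    have "0 \<le> (\<integral>t. norm (f t) \<partial>LM L)" by auto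
    then show "norm (g x * cum L f x) \<le> norm (g x * complex_of_real (\<integral>t. norm (f t) \<partial>LM L))"
      using cum_bound[OF f, of x] by (simp add: norm_mult mult_left_mono)
  qed
qed

lemma AE_neq_LM: "AE x in LM L. x \<noteq> (t::real)"
proof (cases "t \<in> {0..L}")
  case True
  have "{t} \<in> null_sets (LM L)"
    using True by (auto simp: null_sets_restrict_space)
  from AE_not_in[OF this] show ?thesis by auto
next
  case False
  then show ?thesis by (intro AE_I2) auto
qed

lemma cum_rev:
  assumes f: "integrable (LM L) f"
  shows "(\<integral>x. (if t \<le> x then f x else 0) \<partial>LM L) = integral\<^sup>L (LM L) f - cum L f t"
proof -
  have "(\<integral>x. (if t \<le> x then f x else 0) \<partial>LM L) = (\<integral>x. f x - (if x \<le> t then f x else 0) \<partial>LM L)"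
  proof (rule integral_cong_AE)
    show "AE x in LM L. (if t \<le> x then f x else 0) = f x - (if x \<le> t then f x else 0)"
      using AE_neq_LM[of t L] by eventually_elim auto
  qed (use f cum_integrable[OF f] in \<open>auto intro: borel_measurable_integrable\<close>)
  also have "\<dots> = integral\<^sup>L (LM L) f - cum L f t"
    unfolding cum_def using f cum_integrable[OF f] by (subst Bochner_Integration.integral_diff) auto
  finally show ?thesis .
qed

lemma ibp_core:
  assumes f: "integrable (LM L) f" and g: "integrable (LM L) g"
  shows "(\<integral>x. f x * cum L g x + cum L f x * g x \<partial>LM L) = integral\<^sup>L (LM L) f * integral\<^sup>L (LM L) g"
proof -
  have "(\<integral>x. f x * cum L g x \<partial>LM L) = (\<integral>t. g t * (integral\<^sup>L (LM L) f - cum L f t) \<partial>LM L)"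
    using core_fubini[OF f g] unfolding cum_def[symmetric] by (simp add: cum_rev[OF f])
  also have "\<dots> = integral\<^sup>L (LM L) g * integral\<^sup>L (LM L) f - (\<integral>t. g t * cum L f t \<partial>LM L)"
    using integrable_mult_cum[OF f g] g by (simp add: right_diff_distrib Bochner_Integration.integral_diff)
  finally show ?thesis
    using integrable_mult_cum[OF f g] integrable_mult_cum[OF g f]
    by (subst Bochner_Integration.integral_add) (auto simp: mult.commute)
qed

definition L2 :: "real \<Rightarrow> (real \<Rightarrow> complex) \<Rightarrow> bool" where
  "L2 L f \<longleftrightarrow> integrable (LM L) f \<and> integrable (LM L) (\<lambda>x. (norm (f x))^2)"

definition H1B :: "real \<Rightarrow> (real \<Rightarrow> complex) \<Rightarrow> (real \<Rightarrow> complex) \<Rightarrow> bool" where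
  "H1B L F f \<longleftrightarrow> L2 L f \<and> (\<forall>x\<in>{0..L}. F x = F 0 + cum L f x)"

lemma L2_meas[measurable_dest]: "L2 L f \<Longrightarrow> f \<in> borel_measurable (LM L)"
  unfolding L2_def by (auto intro: borel_measurable_integrable)

lemma L2_int: "L2 L f \<Longrightarrow> integrable (LM L) f"
  unfolding L2_def by auto

lemma L2_sq: "L2 L f \<Longrightarrow> integrable (LM L) (\<lambda>x. (norm (f x))^2)"
  unfolding L2_def by auto

lemma L2_mult_bounded:
  assumes f: "L2 L f" and h: "h \<in> borel_measurable (LM L)" and B: "\<And>x. x \<in> {0..L} \<Longrightarrow> norm (h x) \<le> B"
  shows "L2 L (\<lambda>x. h x * f x)"
proof -
  have B0: "0 \<le> B" if "L \<ge> 0" using B[of 0] that by (meson atLeastAtMost_iff norm_ge_zero order.trans order_refl)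
  have fm[measurable]: "f \<in> borel_measurable (LM L)" using f by (rule L2_meas)
  note [measurable] = h
  show ?thesis unfolding L2_def
  proof
    show "integrable (LM L) (\<lambda>x. h x * f x)"
    proof (rule Bochner_Integration.integrable_bound[where f="\<lambda>x. B * norm (f x)"])
      show "integrable (LM L) (\<lambda>x. B * norm (f x))" using L2_int[OF f] by auto
      show "(\<lambda>x. h x * f x) \<in> borel_measurable (LM L)" by measurable
      show "AE x in LM L. norm (h x * f x) \<le> norm (B * norm (f x))"
      proof (rule AE_I2)
        fix x assume "x \<in> space (LM L)"
        then have x: "x \<in> {0..L}" by simp
        then have "L \<ge> 0" by simp
        then show "norm (h x * f x) \<le> norm (B * norm (f x))"
          using B[OF x] B0 by (simp add: norm_mult abs_of_nonneg mult_right_mono)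
      qed
    qed
    show "integrable (LM L) (\<lambda>x. (norm (h x * f x))^2)"
    proof (rule Bochner_Integration.integrable_bound[where f="\<lambda>x. B^2 * (norm (f x))^2"])
      show "integrable (LM L) (\<lambda>x. B^2 * (norm (f x))^2)" using L2_sq[OF f] by auto
      show "(\<lambda>x. (norm (h x * f x))^2) \<in> borel_measurable (LM L)" by measurable
      show "AE x in LM L. norm ((norm (h x * f x))^2) \<le> norm (B^2 * (norm (f x))^2)"
      proof (rule AE_I2)
        fix x assume "x \<in> space (LM L)"
        then have x: "x \<in> {0..L}" by simp
        have "(norm (h x))^2 \<le> B^2" using B[OF x] by (simp add: power_mono)
        then show "norm ((norm (h x * f x))^2) \<le> norm (B^2 * (norm (f x))^2)"
          by (simp add: norm_mult power_mult_distrib mult_right_mono)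
      qed
    qed
  qed
qed

lemma L2_add:
  assumes f: "L2 L f" and g: "L2 L g" shows "L2 L (\<lambda>x. f x + g x)"
  unfolding L2_def
proof
  have [measurable]: "f \<in> borel_measurable (LM L)" "g \<in> borel_measurable (LM L)"
    using f g by (auto intro: L2_meas)
  show "integrable (LM L) (\<lambda>x. f x + g x)" using f g by (auto intro: L2_int)
  show "integrable (LM L) (\<lambda>x. (norm (f x + g x))^2)"
  proof (rule Bochner_Integration.integrable_bound[where f="\<lambda>x. 2 * (norm (f x))^2 + 2 * (norm (g x))^2"])
    show "integrable (LM L) (\<lambda>x. 2 * (norm (f x))^2 + 2 * (norm (g x))^2)"
      using L2_sq[OF f] L2_sq[OF g] by auto
    show "(\<lambda>x. (norm (f x + g x))^2) \<in> borel_measurable (LM L)" by measurable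
    show "AE x in LM L. norm ((norm (f x + g x))^2) \<le> norm (2 * (norm (f x))^2 + 2 * (norm (g x))^2)"
    proof (rule AE_I2)
      fix x
      have "norm (f x + g x) \<le> norm (f x) + norm (g x)" by (rule norm_triangle_ineq)
      then have "(norm (f x + g x))^2 \<le> (norm (f x) + norm (g x))^2" by (simp add: power_mono)
      also have "\<dots> \<le> 2 * (norm (f x))^2 + 2 * (norm (g x))^2"
        by (smt (verit) sum_squares_bound power2_sum zero_le_power2 power2_diff)
      finally show "norm ((norm (f x + g x))^2) \<le> norm (2 * (norm (f x))^2 + 2 * (norm (g x))^2)"
        by simp
    qed
  qed
qed

lemma L2_cmult: "L2 L f \<Longrightarrow> L2 L (\<lambda>x. c * f x)"
  using L2_mult_bounded[of L f "\<lambda>_. c" "norm c"] by auto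

lemma L2_cnj: "L2 L f \<Longrightarrow> L2 L (\<lambda>x. cnj (f x))"
  unfolding L2_def by auto

lemma H1B_D: "H1B L F f \<Longrightarrow> x \<in> {0..L} \<Longrightarrow> F x = F 0 + cum L f x"
  unfolding H1B_def by blast

lemma H1B_L2: "H1B L F f \<Longrightarrow> L2 L f"
  unfolding H1B_def by blast

lemma H1B_meas:
  assumes "H1B L F f" shows "F \<in> borel_measurable (LM L)"
proof -
  have fi: "integrable (LM L) f" using assms unfolding H1B_def L2_def by blast
  have "(\<lambda>x. F 0 + cum L f x) \<in> borel_measurable (LM L)"
    using cum_meas[OF fi] by (intro borel_measurable_add) auto
  moreover have "\<And>x. x \<in> space (LM L) \<Longrightarrow> F x = F 0 + cum L f x"
    by (rule H1B_D[OF assms]) simp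
  ultimately show ?thesis by (metis measurable_cong)
qed

lemma H1B_bound:
  assumes "H1B L F f" "x \<in> {0..L}"
  shows "norm (F x) \<le> norm (F 0) + (\<integral>t. norm (f t) \<partial>LM L)"
proof -
  have "F x = F 0 + cum L f x" using H1B_D[OF assms] .
  moreover have "integrable (LM L) f" using assms(1) unfolding H1B_def L2_def by blast
  ultimately show ?thesis using cum_bound[of L f x] norm_triangle_ineq[of "F 0" "cum L f x"]
    by auto
qed

lemma H1B_mult:
  assumes F: "H1B L F f" and G: "H1B L G g"
  shows "H1B L (\<lambda>x. F x * G x) (\<lambda>x. f x * G x + F x * g x)"
proof -
  have f2: "L2 L f" and g2: "L2 L g" using F G by (auto intro: H1B_L2)
  have fi: "integrable (LM L) f" and gi: "integrable (LM L) g" using f2 g2 by (auto intro: L2_int)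
  have Fm: "F \<in> borel_measurable (LM L)" and Gm: "G \<in> borel_measurable (LM L)"
    using F G by (auto intro: H1B_meas)
  have L2fG: "L2 L (\<lambda>x. G x * f x)"
    by (rule L2_mult_bounded[OF f2 Gm H1B_bound[OF G]])
  have L2Fg: "L2 L (\<lambda>x. F x * g x)"
    by (rule L2_mult_bounded[OF g2 Fm H1B_bound[OF F]])
  have L2d: "L2 L (\<lambda>x. f x * G x + F x * g x)"
    using L2_add[OF L2fG L2Fg] by (simp add: mult.commute)
  have eq: "F x * G x = F 0 * G 0 + cum L (\<lambda>x. f x * G x + F x * g x) x" if x: "x \<in> {0..L}" for x
  proof -
    define fx where "fx = (\<lambda>t. if t \<le> x then f t else 0)"
    define gx where "gx = (\<lambda>t. if t \<le> x then g t else 0)"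
    have fxi: "integrable (LM L) fx" unfolding fx_def by (rule cum_integrable[OF fi])
    have gxi: "integrable (LM L) gx" unfolding gx_def by (rule cum_integrable[OF gi])
    have cg: "cum L g t = cum L gx t" if "t \<le> x" for t
      unfolding cum_def gx_def by (rule Bochner_Integration.integral_cong) (use that in auto)
    have cf: "cum L f t = cum L fx t" if "t \<le> x" for t
      unfolding cum_def fx_def by (rule Bochner_Integration.integral_cong) (use that in auto)
    have "cum L (\<lambda>x. f x * G x + F x * g x) x
        = (\<integral>t. fx t * G 0 + F 0 * gx t + (fx t * cum L gx t + cum L fx t * gx t) \<partial>LM L)"
    proof (subst cum_def, rule Bochner_Integration.integral_cong)
      fix t assume "t \<in> space (LM L)"
      then have t: "t \<in> {0..L}" by simp
      show "(if t \<le> x then f t * G t + F t * g t else 0) =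
          fx t * G 0 + F 0 * gx t + (fx t * cum L gx t + cum L fx t * gx t)"
      proof (cases "t \<le> x")
        case True
        have e1: "F t = F 0 + cum L fx t" using H1B_D[OF F t] cf[OF True] by simp
        have e2: "G t = G 0 + cum L gx t" using H1B_D[OF G t] cg[OF True] by simp
        have e3: "fx t = f t" "gx t = g t" using True by (auto simp: fx_def gx_def)
        show ?thesis unfolding e1 e2 e3 using True by (simp add: algebra_simps)
      qed (auto simp: fx_def gx_def)
    qed simp
    also have "\<dots> = integral\<^sup>L (LM L) fx * G 0 + F 0 * integral\<^sup>L (LM L) gx
        + (\<integral>t. fx t * cum L gx t + cum L fx t * gx t \<partial>LM L)"
      using fxi gxi integrable_mult_cum[OF gxi fxi] integrable_mult_cum[OF fxi gxi]
      by (subst Bochner_Integration.integral_add, auto simp: mult.commute)+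
    also have "\<dots> = cum L f x * G 0 + F 0 * cum L g x + cum L f x * cum L g x"
      unfolding ibp_core[OF fxi gxi] by (simp add: cum_def fx_def gx_def)
    also have "\<dots> = F x * G x - F 0 * G 0"
      unfolding H1B_D[OF F x] H1B_D[OF G x] by (simp add: algebra_simps)
    finally show ?thesis by simp
  qed
  show ?thesis unfolding H1B_def using L2d eq by blast
qed

lemma cum_add: "integrable (LM L) f \<Longrightarrow> integrable (LM L) g \<Longrightarrow> cum L (\<lambda>t. f t + g t) x = cum L f x + cum L g x"
  unfolding cum_def
  by (subst Bochner_Integration.integral_add[symmetric]) (auto intro!: cum_integrable Bochner_Integration.integral_cong)

lemma cum_cmult: "cum L (\<lambda>t. c * f t) x = c * cum L f x"
proof -
  have "(\<lambda>t. if t \<le> x then c * f t else 0) = (\<lambda>t. c * (if t \<le> x then f t else 0))" by auto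
  then show ?thesis unfolding cum_def by simp
qed

lemma cum_cnj: "cum L (\<lambda>t. cnj (f t)) x = cnj (cum L f x)"
proof -
  have "(\<lambda>t. if t \<le> x then cnj (f t) else 0) = (\<lambda>t. cnj (if t \<le> x then f t else 0))" by auto
  then show ?thesis unfolding cum_def by simp
qed

lemma H1B_I: "L2 L f \<Longrightarrow> (\<And>x. x \<in> {0..L} \<Longrightarrow> F x = F 0 + cum L f x) \<Longrightarrow> H1B L F f"
  unfolding H1B_def by blast

lemma H1B_add: assumes F: "H1B L F f" and G: "H1B L G g" shows "H1B L (\<lambda>x. F x + G x) (\<lambda>x. f x + g x)"
proof (rule H1B_I)
  show "L2 L (\<lambda>x. f x + g x)" by (rule L2_add[OF H1B_L2[OF F] H1B_L2[OF G]])
  fix x assume x: "x \<in> {0..L}"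
  have "cum L (\<lambda>t. f t + g t) x = cum L f x + cum L g x"
    by (rule cum_add[OF L2_int[OF H1B_L2[OF F]] L2_int[OF H1B_L2[OF G]]])
  then show "F x + G x = F 0 + G 0 + cum L (\<lambda>x. f x + g x) x"
    using H1B_D[OF F x] H1B_D[OF G x] by simp
qed

lemma H1B_cmult: assumes F: "H1B L F f" shows "H1B L (\<lambda>x. c * F x) (\<lambda>x. c * f x)"
proof (rule H1B_I)
  show "L2 L (\<lambda>x. c * f x)" by (rule L2_cmult[OF H1B_L2[OF F]])
  fix x assume x: "x \<in> {0..L}"
  show "c * F x = c * F 0 + cum L (\<lambda>x. c * f x) x"
    using H1B_D[OF F x] cum_cmult[of L c f x] by (simp add: distrib_left)
qed

lemma H1B_cnj: assumes F: "H1B L F f" shows "H1B L (\<lambda>x. cnj (F x)) (\<lambda>x. cnj (f x))"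
proof (rule H1B_I)
  show "L2 L (\<lambda>x. cnj (f x))" by (rule L2_cnj[OF H1B_L2[OF F]])
  fix x assume x: "x \<in> {0..L}"
  show "cnj (F x) = cnj (F 0) + cum L (\<lambda>x. cnj (f x)) x"
    using H1B_D[OF F x] cum_cnj[of L f x] by simp
qed

lemma H1B_minus: "H1B L F f \<Longrightarrow> H1B L G g \<Longrightarrow> H1B L (\<lambda>x. F x - G x) (\<lambda>x. f x - g x)"
  using H1B_add[of L F f "\<lambda>x. -1 * G x" "\<lambda>x. -1 * g x"] H1B_cmult[of L G g "-1"] by simp

lemma H1B_cong: assumes F: "H1B L F f" and L: "L \<ge> 0" and eq: "\<And>x. x \<in> {0..L} \<Longrightarrow> F x = G x" shows "H1B L G f"
proof (rule H1B_I)
  show "L2 L f" by (rule H1B_L2[OF F])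
  fix x assume x: "x \<in> {0..L}"
  have "0 \<in> {0..L}" using L by simp
  then show "G x = G 0 + cum L f x" using H1B_D[OF F x] eq[OF x] eq[of 0] by simp
qed

lemma H1B_FTC:
  assumes "H1B L F f" "L \<ge> 0"
  shows "F L - F 0 = integral\<^sup>L (LM L) f"
proof -
  have "F L = F 0 + cum L f L" by (rule H1B_D[OF assms(1)]) (use assms(2) in simp)
  moreover have "cum L f L = integral\<^sup>L (LM L) f"
    unfolding cum_def by (rule Bochner_Integration.integral_cong) auto
  ultimately show ?thesis by simp
qed

lemma H1B_unique:
  assumes F1: "H1B L F f" and F2: "H1B L F g" and h: "H1B L h dh" and L: "L \<ge> 0"
  shows "(\<integral>x. h x * f x \<partial>LM L) = (\<integral>x. h x * g x \<partial>LM L)"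
proof -
  have p1: "H1B L (\<lambda>x. h x * F x) (\<lambda>x. dh x * F x + h x * f x)" by (rule H1B_mult[OF h F1])
  have p2: "H1B L (\<lambda>x. h x * F x) (\<lambda>x. dh x * F x + h x * g x)" by (rule H1B_mult[OF h F2])
  have i1: "integrable (LM L) (\<lambda>x. F x * dh x)"
    by (rule L2_int[OF L2_mult_bounded[OF H1B_L2[OF h] H1B_meas[OF F1] H1B_bound[OF F1]]])
  have i2: "integrable (LM L) (\<lambda>x. h x * f x)"
    by (rule L2_int[OF L2_mult_bounded[OF H1B_L2[OF F1] H1B_meas[OF h] H1B_bound[OF h]]])
  have i3: "integrable (LM L) (\<lambda>x. h x * g x)"
    by (rule L2_int[OF L2_mult_bounded[OF H1B_L2[OF F2] H1B_meas[OF h] H1B_bound[OF h]]])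
  have "(\<integral>x. dh x * F x + h x * f x \<partial>LM L) = (\<integral>x. dh x * F x + h x * g x \<partial>LM L)"
    using H1B_FTC[OF p1 L] H1B_FTC[OF p2 L] by simp
  then show ?thesis using i1 i2 i3
    by (subst (asm) (1 2) Bochner_Integration.integral_add) (auto simp: mult.commute)
qed

lemma cum_HK:
  fixes f :: "real \<Rightarrow> 'a::euclidean_space"
  assumes f: "f absolutely_integrable_on {0..L}" and x: "x \<in> {0..L}"
  shows "(\<integral>t. (if t \<le> x then f t else 0) \<partial>LM L) = integral {0..x} f"
proof -
  have fi: "integrable (LM L) f" by (rule absolutely_integrable_imp_integrable[OF f]) auto
  have "integrable (LM L) (\<lambda>t. if t \<le> x then f t else 0)"
  proof (rule Bochner_Integration.integrable_bound[OF fi])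
    have [measurable]: "f \<in> borel_measurable (LM L)" by (rule borel_measurable_integrable[OF fi])
    show "(\<lambda>t. if t \<le> x then f t else 0) \<in> borel_measurable (LM L)" by measurable
  qed auto
  then have "(\<integral>t. (if t \<le> x then f t else 0) \<partial>LM L) = integral {0..L} (\<lambda>t. if t \<le> x then f t else 0)"
    by (rule lebesgue_integral_eq_integral) auto
  also have "\<dots> = integral {0..L} (\<lambda>t. if t \<in> {..x} then f t else 0)" by simp
  also have "\<dots> = integral ({..x} \<inter> {0..L}) f" by (rule integral_restrict_Int)
  also have "{..x} \<inter> {0..L} = {0..x}" using x by auto
  finally show ?thesis .
qed

lemma sqint_L2:
  fixes f :: "real \<Rightarrow> complex"
  assumes "sqint L f" shows "L2 L f"
  unfolding L2_def
proof
  show "integrable (LM L) f"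
    using assms unfolding sqint_def by (intro absolutely_integrable_imp_integrable) auto
  have "(\<lambda>x. (norm (f x))^2) absolutely_integrable_on {0..L}"
    using assms unfolding sqint_def by (intro nonnegative_absolutely_integrable_1) auto
  then show "integrable (LM L) (\<lambda>x. (norm (f x))^2)"
    by (intro absolutely_integrable_imp_integrable) auto
qed

lemma H1_H1B:
  fixes F f :: "real \<Rightarrow> complex"
  assumes "H1 L F f" shows "H1B L F f"
proof (rule H1B_I)
  show "L2 L f" using assms unfolding H1_def by (auto intro: sqint_L2)
  show "F x = F 0 + cum L f x" if x: "x \<in> {0..L}" for x
  proof -
    have "f absolutely_integrable_on {0..L}" using assms unfolding H1_def sqint_def by blast
    then have "cum L f x = integral {0..x} f" unfolding cum_def by (rule cum_HK[OF _ x])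
    moreover have "F x = F 0 + integral {0..x} f" using assms x unfolding H1_def by blast
    ultimately show "F x = F 0 + cum L f x" by simp
  qed
qed

lemma H1_real_H1B:
  fixes q dq :: "real \<Rightarrow> real"
  assumes q: "H1 L q dq" shows "H1B L (\<lambda>x. complex_of_real (q x)) (\<lambda>x. complex_of_real (dq x))"
proof (rule H1B_I)
  have dqa: "dq absolutely_integrable_on {0..L}" using assms unfolding H1_def sqint_def by blast
  have dqi: "integrable (LM L) dq" by (rule absolutely_integrable_imp_integrable[OF dqa]) auto
  have "(\<lambda>x. (norm (dq x))^2) absolutely_integrable_on {0..L}"
    using assms unfolding H1_def sqint_def by (intro nonnegative_absolutely_integrable_1) auto
  then have "integrable (LM L) (\<lambda>x. (norm (dq x))^2)"
    by (intro absolutely_integrable_imp_integrable) auto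
  then show "L2 L (\<lambda>x. complex_of_real (dq x))"
    unfolding L2_def using dqi by auto
  show "complex_of_real (q x) = complex_of_real (q 0) + cum L (\<lambda>x. complex_of_real (dq x)) x" if x: "x \<in> {0..L}" for x
  proof -
    have "(\<lambda>t. if t \<le> x then complex_of_real (dq t) else 0) = (\<lambda>t. complex_of_real (if t \<le> x then dq t else 0))" by auto
    then have "cum L (\<lambda>x. complex_of_real (dq x)) x = complex_of_real (\<integral>t. (if t \<le> x then dq t else 0) \<partial>LM L)"
      unfolding cum_def by simp
    also have "\<dots> = complex_of_real (integral {0..x} dq)" using cum_HK[OF dqa x] by simp
    moreover have "q x = q 0 + integral {0..x} dq" using assms x unfolding H1_def by blast
    ultimately show "complex_of_real (q x) = complex_of_real (q 0) + cum L (\<lambda>x. complex_of_real (dq x)) x"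
      by simp
  qed
qed

lemma HK_Bochner:
  fixes f :: "real \<Rightarrow> 'a::euclidean_space"
  assumes "integrable (LM L) f" shows "integral {0..L} f = integral\<^sup>L (LM L) f"
  by (rule lebesgue_integral_eq_integral[symmetric]) (use assms in auto)

lemma L2sq_eq: "L2 L f \<Longrightarrow> L2sq L f = (\<integral>x. (norm (f x))^2 \<partial>LM L)"
  unfolding L2sq_def by (rule HK_Bochner) (auto intro: L2_sq)

definition N2 :: "real \<Rightarrow> (real \<Rightarrow> complex) \<Rightarrow> real" where
  "N2 L f = (\<integral>x. (norm (f x))^2 \<partial>LM L)"

lemma N2_nonneg: "N2 L f \<ge> 0"
  unfolding N2_def by auto

lemma measure_LM: "L \<ge> 0 \<Longrightarrow> Sigma_Algebra.measure (LM L) {0..L} = L"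
  by (simp add: measure_restrict_space)

lemma int_const_LM: "L \<ge> 0 \<Longrightarrow> (\<integral>x. (c::real) \<partial>LM L) = L * c"
  by (simp add: measure_LM)

lemma int_le_const:
  fixes g :: "real \<Rightarrow> real"
  assumes "integrable (LM L) g" "\<And>x. x \<in> {0..L} \<Longrightarrow> g x \<le> K" "L \<ge> 0"
  shows "(\<integral>x. g x \<partial>LM L) \<le> L * K"
proof -
  have "(\<integral>x. g x \<partial>LM L) \<le> (\<integral>x. K \<partial>LM L)"
    by (rule integral_mono) (use assms in auto)
  then show ?thesis by (simp add: measure_LM[OF assms(3)])
qed

lemma L2_const: "L2 L (\<lambda>x. c)"
  unfolding L2_def by auto

lemma H1B_L2self: assumes "H1B L F f" shows "L2 L F"
  using L2_mult_bounded[OF L2_const[of L 1] H1B_meas[OF assms] H1B_bound[OF assms]] by simp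

lemma amgm: "e > 0 \<Longrightarrow> 2 * (a::real) * b \<le> e * a^2 + b^2 / e"
proof -
  assume e: "e > 0"
  have "0 \<le> (e * a - b)^2 / e" using e by auto
  also have "(e * a - b)^2 / e = e * a^2 - 2 * a * b + b^2 / e"
    using e by (simp add: power2_eq_square field_simps)
  finally show ?thesis by simp
qed

lemma sq_add_le: "(norm ((x::complex) + y))^2 \<le> 2 * (norm x)^2 + 2 * (norm y)^2"
proof -
  have "(norm (x + y))^2 \<le> (norm x + norm y)^2"
    using norm_triangle_ineq[of x y] by (simp add: power_mono)
  also have "\<dots> \<le> 2 * (norm x)^2 + 2 * (norm y)^2"
    using amgm[of 1 "norm x" "norm y"] by (simp add: power2_sum)
  finally show ?thesis .
qed

lemma L2_prod_norm_int:
  assumes f: "L2 L f" and g: "L2 L g"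
  shows "integrable (LM L) (\<lambda>x. norm (f x) * norm (g x))"
proof (rule Bochner_Integration.integrable_bound[where f="\<lambda>x. (norm (f x))^2 + (norm (g x))^2"])
  show "integrable (LM L) (\<lambda>x. (norm (f x))^2 + (norm (g x))^2)" using L2_sq[OF f] L2_sq[OF g] by auto
  have [measurable]: "f \<in> borel_measurable (LM L)" "g \<in> borel_measurable (LM L)" using f g by (auto intro: L2_meas)
  show "(\<lambda>x. norm (f x) * norm (g x)) \<in> borel_measurable (LM L)" by measurable
  show "AE x in LM L. norm (norm (f x) * norm (g x)) \<le> norm ((norm (f x))^2 + (norm (g x))^2)"
  proof (rule AE_I2)
    fix x
    show "norm (norm (f x) * norm (g x)) \<le> norm ((norm (f x))^2 + (norm (g x))^2)"
    proof -
      have h1: "2 * norm (f x) * norm (g x) \<le> (norm (f x))^2 + (norm (g x))^2" using amgm[of 1 "norm (f x)" "norm (g x)"] by simp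
      have h2: "0 \<le> norm (f x) * norm (g x)" by simp
      have e1: "norm (norm (f x) * norm (g x)) = norm (f x) * norm (g x)" by simp
      have e2: "norm ((norm (f x))^2 + (norm (g x))^2) = (norm (f x))^2 + (norm (g x))^2" by simp
      show ?thesis unfolding e1 e2 using h1 h2 by linarith
    qed
  qed
qed

lemma L2_prod_int:
  assumes f: "L2 L f" and g: "L2 L g"
  shows "integrable (LM L) (\<lambda>x. f x * g x)"
proof (rule Bochner_Integration.integrable_bound[OF L2_prod_norm_int[OF f g]])
  have [measurable]: "f \<in> borel_measurable (LM L)" "g \<in> borel_measurable (LM L)" using f g by (auto intro: L2_meas)
  show "(\<lambda>x. f x * g x) \<in> borel_measurable (LM L)" by measurable
qed (auto simp: norm_mult)

lemma cs_real:
  fixes I a b :: real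
  assumes "0 \<le> I" "0 \<le> a" "0 \<le> b" and H: "\<And>t. t > 0 \<Longrightarrow> 2 * I \<le> t * a + b / t"
  shows "I \<le> sqrt a * sqrt b"
proof (cases "a > 0 \<and> b > 0")
  case True
  define t where "t = sqrt b / sqrt a"
  have t: "t > 0" using True by (simp add: t_def)
  have sa: "sqrt a * sqrt a = a" "sqrt b * sqrt b = b" using True by auto
  have "t * a = sqrt a * sqrt b" unfolding t_def using True
    by (metis sa(1) mult.commute nonzero_mult_div_cancel_left real_sqrt_gt_0_iff order_less_irrefl times_divide_eq_left)
  moreover have "b / t = sqrt a * sqrt b" unfolding t_def using True
    by (metis sa(2) divide_divide_eq_right mult.commute nonzero_mult_div_cancel_left real_sqrt_gt_0_iff order_less_irrefl)
  ultimately show ?thesis using H[OF t] by simp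
next
  case False
  show ?thesis
  proof (rule ccontr)
    assume "\<not> I \<le> sqrt a * sqrt b"
    moreover have "0 \<le> sqrt a * sqrt b" using assms(2,3) by simp
    ultimately have I: "I > 0" by linarith
    show False
    proof (cases "a = 0")
      case True
      define t where "t = b / I + 1"
      have "0 \<le> b / I" using I assms(3) by simp
      then have t: "t > 0" unfolding t_def by linarith
      have "b \<le> I * t" using I unfolding t_def by (simp add: distrib_left)
      then have "b / t \<le> I" using t by (simp add: divide_le_eq mult.commute)
      then show False using H[OF t] True I by simp
    next
      case False
      then have b0: "b = 0" using \<open>\<not> (a > 0 \<and> b > 0)\<close> assms(2,3) by auto
      have a0: "a > 0" using False assms(2) by auto
      define t where "t = I / (a + 1)"
      have t: "t > 0" using I a0 by (simp add: t_def)
      have "t * a < I" using I a0 unfolding t_def by (simp add: divide_less_eq)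
      then show False using H[OF t] b0 I by simp
    qed
  qed
qed

lemma CS:
  assumes f: "L2 L f" and g: "L2 L g"
  shows "norm (\<integral>x. f x * g x \<partial>LM L) \<le> sqrt (N2 L f) * sqrt (N2 L g)"
proof -
  have "norm (\<integral>x. f x * g x \<partial>LM L) \<le> (\<integral>x. norm (f x * g x) \<partial>LM L)"
    by (rule integral_norm_bound)
  also have "\<dots> = (\<integral>x. norm (f x) * norm (g x) \<partial>LM L)" by (simp add: norm_mult)
  also have "\<dots> \<le> sqrt (N2 L f) * sqrt (N2 L g)"
  proof (rule cs_real)
    show "0 \<le> (\<integral>x. norm (f x) * norm (g x) \<partial>LM L)" by auto
    show "0 \<le> N2 L f" "0 \<le> N2 L g" by (auto intro: N2_nonneg)
    fix t :: real assume t: "t > 0"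
    have "2 * (\<integral>x. norm (f x) * norm (g x) \<partial>LM L) = (\<integral>x. 2 * norm (f x) * norm (g x) \<partial>LM L)"
      by (simp add: mult.assoc)
    also have "\<dots> \<le> (\<integral>x. t * (norm (f x))^2 + (norm (g x))^2 / t \<partial>LM L)"
      by (rule integral_mono) (use L2_prod_norm_int[OF f g] L2_sq[OF f] L2_sq[OF g] amgm[OF t] in \<open>auto simp: mult.assoc\<close>)
    also have "\<dots> = t * N2 L f + N2 L g / t"
      unfolding N2_def using L2_sq[OF f] L2_sq[OF g] by simp
    finally show "2 * (\<integral>x. norm (f x) * norm (g x) \<partial>LM L) \<le> t * N2 L f + N2 L g / t" .
  qed
  finally show ?thesis .
qed

lemma N2_add_le: assumes "L2 L f" "L2 L g" shows "N2 L (\<lambda>x. f x + g x) \<le> 2 * N2 L f + 2 * N2 L g"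
proof -
  have "N2 L (\<lambda>x. f x + g x) \<le> (\<integral>x. 2 * (norm (f x))^2 + 2 * (norm (g x))^2 \<partial>LM L)"
    unfolding N2_def
    by (rule integral_mono) (use L2_sq[OF L2_add[OF assms]] L2_sq[OF assms(1)] L2_sq[OF assms(2)] sq_add_le in auto)
  also have "\<dots> = 2 * N2 L f + 2 * N2 L g"
    unfolding N2_def using L2_sq[OF assms(1)] L2_sq[OF assms(2)] by simp
  finally show ?thesis .
qed

lemma N2_cmult: "N2 L (\<lambda>x. c * f x) = (norm c)^2 * N2 L f"
  unfolding N2_def by (simp add: norm_mult power_mult_distrib)

lemma re_cum_bound:
  assumes f: "integrable (LM L) f" and h: "integrable (LM L) h"
    and hb: "\<And>t. t \<in> {0..L} \<Longrightarrow> \<bar>Re (f t)\<bar> \<le> h t"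
  shows "\<bar>Re (cum L f y)\<bar> \<le> (\<integral>t. h t \<partial>LM L)"
proof -
  have "Re (cum L f y) = (\<integral>t. Re (if t \<le> y then f t else 0) \<partial>LM L)"
    unfolding cum_def by (rule integral_Re[symmetric]) (rule cum_integrable[OF f])
  also have "\<dots> = (\<integral>t. (if t \<le> y then Re (f t) else 0) \<partial>LM L)"
    by (rule Bochner_Integration.integral_cong) auto
  finally have e: "Re (cum L f y) = (\<integral>t. (if t \<le> y then Re (f t) else 0) \<partial>LM L)" .
  have ri: "integrable (LM L) (\<lambda>t. if t \<le> y then Re (f t) else 0)"
  proof -
    have "(\<lambda>t. if t \<le> y then Re (f t) else 0) = (\<lambda>t. Re (if t \<le> y then f t else 0))" by auto
    then show ?thesis using integrable_Re[OF cum_integrable[OF f, of y]] by simp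
  qed
  have "\<bar>\<integral>t. (if t \<le> y then Re (f t) else 0) \<partial>LM L\<bar> \<le> (\<integral>t. \<bar>if t \<le> y then Re (f t) else 0\<bar> \<partial>LM L)"
    by (rule integral_abs_bound)
  also have "\<dots> \<le> (\<integral>t. h t \<partial>LM L)"
  proof (rule integral_mono)
    show "integrable (LM L) (\<lambda>t. \<bar>if t \<le> y then Re (f t) else 0\<bar>)" using ri by auto
    show "integrable (LM L) h" by (rule h)
    fix t assume "t \<in> space (LM L)"
    then have t: "t \<in> {0..L}" by simp
    show "\<bar>if t \<le> y then Re (f t) else 0\<bar> \<le> h t"
      using hb[OF t] by auto
  qed
  finally show ?thesis using e by simp
qed

lemma energy:
  assumes E: "H1B L E dE" and EL: "E L = 0" and L: "L \<ge> 0" and h: "integrable (LM L) h"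
    and hb: "\<And>t. t \<in> {0..L} \<Longrightarrow> \<bar>Re (dE t)\<bar> \<le> h t" and x: "x \<in> {0..L}"
  shows "\<bar>Re (E x)\<bar> \<le> 2 * (\<integral>t. h t \<partial>LM L)"
proof -
  have e1: "E x = E 0 + cum L dE x" by (rule H1B_D[OF E x])
  have e2: "E L = E 0 + cum L dE L" by (rule H1B_D[OF E]) (use L in simp)
  have "E x = E x - E L" using EL by simp
  also have "\<dots> = (E 0 + cum L dE x) - (E 0 + cum L dE L)" using e1 e2 by simp
  also have "\<dots> = cum L dE x - cum L dE L" by simp
  finally have "E x = cum L dE x - cum L dE L" .
  moreover have di: "integrable (LM L) dE" by (rule L2_int[OF H1B_L2[OF E]])
  ultimately show ?thesis
    using re_cum_bound[OF di h hb, of x] re_cum_bound[OF di h hb, of L] by simp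
qed

lemma re_identity:
  fixes l :: real
  shows "Re (d1 * cnj u1 + u1 * cnj d1 + (d3 * cnj u3 + u3 * cnj d3))
    = 2 * Re ((d1 + of_real l * u3) * cnj u1) + 2 * Re ((d3 - of_real l * u1) * cnj u3)"
  by (simp add: algebra_simps)

lemma norm_sq_re: "Re (z * cnj z) = (norm z)^2"
  by (metis Re_complex_of_real complex_norm_square)

lemma abs_re_le_norm: "\<bar>Re z\<bar> \<le> norm z"
  by (rule abs_Re_le_cmod)

lemma poincare:
  assumes L: "L > 0" and u: "H1B L u du" and uL: "u L = 0"
  shows "N2 L u \<le> 16 * L^2 * N2 L du"
proof -
  have E: "H1B L (\<lambda>x. u x * cnj (u x)) (\<lambda>x. du x * cnj (u x) + u x * cnj (du x))"
    by (rule H1B_mult[OF u H1B_cnj[OF u]])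
  define e where "e = 1 / (4 * L)"
  have e: "e > 0" using L by (simp add: e_def)
  define h where "h = (\<lambda>t. e * (norm (u t))^2 + (norm (du t))^2 / e)"
  have uL2: "L2 L u" by (rule H1B_L2self[OF u])
  have duL2: "L2 L du" by (rule H1B_L2[OF u])
  have hi: "integrable (LM L) h" unfolding h_def using L2_sq[OF uL2] L2_sq[OF duL2] by auto
  have hint: "(\<integral>t. h t \<partial>LM L) = e * N2 L u + N2 L du / e"
    unfolding h_def N2_def using L2_sq[OF uL2] L2_sq[OF duL2] by simp
  have hb: "\<bar>Re (du t * cnj (u t) + u t * cnj (du t))\<bar> \<le> h t" for t
  proof -
    have "\<bar>Re (du t * cnj (u t) + u t * cnj (du t))\<bar> \<le> norm (du t * cnj (u t) + u t * cnj (du t))"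
      by (rule abs_Re_le_cmod)
    also have "\<dots> \<le> norm (du t * cnj (u t)) + norm (u t * cnj (du t))" by (rule norm_triangle_ineq)
    also have "\<dots> = 2 * norm (u t) * norm (du t)" by (simp add: norm_mult)
    also have "\<dots> \<le> h t" unfolding h_def by (rule amgm[OF e])
    finally show ?thesis .
  qed
  have pt: "(norm (u x))^2 \<le> 2 * (e * N2 L u + N2 L du / e)" if x: "x \<in> {0..L}" for x
  proof -
    have "\<bar>Re (u x * cnj (u x))\<bar> \<le> 2 * (\<integral>t. h t \<partial>LM L)"
      by (rule energy[OF E _ _ hi hb x]) (use uL L in auto)
    then show ?thesis unfolding norm_sq_re hint by simp
  qed
  have "N2 L u \<le> L * (2 * (e * N2 L u + N2 L du / e))"
    unfolding N2_def by (rule int_le_const[OF L2_sq[OF uL2]]) (use pt L in \<open>auto simp: N2_def\<close>)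
  also have "\<dots> = N2 L u / 2 + 8 * L^2 * N2 L du"
    using L unfolding e_def by (simp add: field_simps power2_eq_square)
  finally show ?thesis by simp
qed

lemma energy2:
  fixes l :: real
  assumes L: "L > 0" and u1: "H1B L u1 du1" and u3: "H1B L u3 du3" and z1: "u1 L = 0" and z3: "u3 L = 0"
  shows "N2 L u1 + N2 L u3 \<le> 16 * L^2 * (N2 L (\<lambda>x. du1 x + of_real l * u3 x) + N2 L (\<lambda>x. du3 x - of_real l * u1 x))"
proof -
  define A where "A = (\<lambda>x. du1 x + of_real l * u3 x)"
  define c where "c = (\<lambda>x. du3 x - of_real l * u1 x)"
  have E: "H1B L (\<lambda>x. u1 x * cnj (u1 x) + u3 x * cnj (u3 x))
       (\<lambda>x. (du1 x * cnj (u1 x) + u1 x * cnj (du1 x)) + (du3 x * cnj (u3 x) + u3 x * cnj (du3 x)))"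
    by (rule H1B_add[OF H1B_mult[OF u1 H1B_cnj[OF u1]] H1B_mult[OF u3 H1B_cnj[OF u3]]])
  define e where "e = 1 / (4 * L)"
  have e: "e > 0" using L by (simp add: e_def)
  have u1L2: "L2 L u1" by (rule H1B_L2self[OF u1])
  have u3L2: "L2 L u3" by (rule H1B_L2self[OF u3])
  have AL2: "L2 L A" unfolding A_def by (rule L2_add[OF H1B_L2[OF u1] L2_cmult[OF u3L2]])
  have cL2: "L2 L c" unfolding c_def
    using L2_add[OF H1B_L2[OF u3] L2_cmult[OF u1L2, of "- of_real l"]] by simp
  define h where "h = (\<lambda>t. e * ((norm (u1 t))^2 + (norm (u3 t))^2) + ((norm (A t))^2 + (norm (c t))^2) / e)"
  have hi: "integrable (LM L) h" unfolding h_def using L2_sq[OF u1L2] L2_sq[OF u3L2] L2_sq[OF AL2] L2_sq[OF cL2] by auto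
  have hint: "(\<integral>t. h t \<partial>LM L) = e * (N2 L u1 + N2 L u3) + (N2 L A + N2 L c) / e"
    unfolding h_def N2_def using L2_sq[OF u1L2] L2_sq[OF u3L2] L2_sq[OF AL2] L2_sq[OF cL2]
    by (simp add: add_divide_distrib)
  have hb: "\<bar>Re ((du1 t * cnj (u1 t) + u1 t * cnj (du1 t)) + (du3 t * cnj (u3 t) + u3 t * cnj (du3 t)))\<bar> \<le> h t" for t
  proof -
    have "\<bar>Re ((du1 t * cnj (u1 t) + u1 t * cnj (du1 t)) + (du3 t * cnj (u3 t) + u3 t * cnj (du3 t)))\<bar>
        = \<bar>2 * Re (A t * cnj (u1 t)) + 2 * Re (c t * cnj (u3 t))\<bar>"
      unfolding A_def c_def re_identity[of "du1 t" "u1 t" "du3 t" "u3 t" l] ..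
    also have "\<dots> \<le> 2 * norm (u1 t) * norm (A t) + 2 * norm (u3 t) * norm (c t)"
    proof -
      have p: "\<bar>Re (A t * cnj (u1 t))\<bar> \<le> norm (u1 t) * norm (A t)"
        using abs_Re_le_cmod[of "A t * cnj (u1 t)"] by (simp add: norm_mult mult.commute)
      have q: "\<bar>Re (c t * cnj (u3 t))\<bar> \<le> norm (u3 t) * norm (c t)"
        using abs_Re_le_cmod[of "c t * cnj (u3 t)"] by (simp add: norm_mult mult.commute)
      show ?thesis using p q by linarith
    qed
    also have "\<dots> \<le> h t"
      using amgm[OF e, of "norm (u1 t)" "norm (A t)"] amgm[OF e, of "norm (u3 t)" "norm (c t)"]
      unfolding h_def by (simp add: add_divide_distrib distrib_left)
    finally show ?thesis .
  qed
  have pt: "(norm (u1 x))^2 + (norm (u3 x))^2 \<le> 2 * (e * (N2 L u1 + N2 L u3) + (N2 L A + N2 L c) / e)"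
    if x: "x \<in> {0..L}" for x
  proof -
    have "\<bar>Re (u1 x * cnj (u1 x) + u3 x * cnj (u3 x))\<bar> \<le> 2 * (\<integral>t. h t \<partial>LM L)"
      by (rule energy[OF E _ _ hi hb x]) (use z1 z3 L in auto)
    then have "\<bar>(norm (u1 x))^2 + (norm (u3 x))^2\<bar> \<le> 2 * (e * (N2 L u1 + N2 L u3) + (N2 L A + N2 L c) / e)"
      unfolding hint plus_complex.sel norm_sq_re .
    then show ?thesis using abs_ge_self[of "(norm (u1 x))^2 + (norm (u3 x))^2"] by linarith
  qed
  have "N2 L u1 + N2 L u3 = (\<integral>x. (norm (u1 x))^2 + (norm (u3 x))^2 \<partial>LM L)"
    unfolding N2_def using L2_sq[OF u1L2] L2_sq[OF u3L2] by simp
  also have "\<dots> \<le> L * (2 * (e * (N2 L u1 + N2 L u3) + (N2 L A + N2 L c) / e))"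
    by (rule int_le_const) (use pt L L2_sq[OF u1L2] L2_sq[OF u3L2] in auto)
  also have "\<dots> = (N2 L u1 + N2 L u3) / 2 + 8 * L^2 * (N2 L A + N2 L c)"
    using L unfolding e_def by (simp add: field_simps power2_eq_square)
  finally have "N2 L u1 + N2 L u3 \<le> (N2 L u1 + N2 L u3) / 2 + 8 * L^2 * (N2 L A + N2 L c)" .
  moreover define Z where "Z = L^2 * (N2 L A + N2 L c)"
  ultimately have "N2 L u1 + N2 L u3 \<le> (N2 L u1 + N2 L u3) / 2 + 8 * Z" by (simp add: mult.assoc)
  then have "N2 L u1 + N2 L u3 \<le> 16 * Z" by argo
  then show ?thesis unfolding Z_def A_def c_def by (simp add: mult.assoc)
qed

lemma NE:
  fixes l :: real
  assumes L: "L > 0" and u1: "H1B L u1 du1" and u2: "H1B L u2 du2" and u3: "H1B L u3 du3"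
    and z1: "u1 L = 0" and z2: "u2 L = 0" and z3: "u3 L = 0"
  shows "N2 L du1 \<le> (2 + 32*l^2*L^2)*(2+32*L^2) * (N2 L (\<lambda>x. du1 x + u2 x + of_real l * u3 x) + N2 L du2 + N2 L (\<lambda>x. du3 x - of_real l * u1 x))"
    and "N2 L du3 \<le> (2 + 32*l^2*L^2)*(2+32*L^2) * (N2 L (\<lambda>x. du1 x + u2 x + of_real l * u3 x) + N2 L du2 + N2 L (\<lambda>x. du3 x - of_real l * u1 x))"
proof -
  define a where "a = (\<lambda>x. du1 x + u2 x + of_real l * u3 x)"
  define A where "A = (\<lambda>x. du1 x + of_real l * u3 x)"
  define c where "c = (\<lambda>x. du3 x - of_real l * u1 x)"
  define S where "S = N2 L a + N2 L du2 + N2 L c"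
  have u1L2: "L2 L u1" by (rule H1B_L2self[OF u1])
  have u2L2: "L2 L u2" by (rule H1B_L2self[OF u2])
  have u3L2: "L2 L u3" by (rule H1B_L2self[OF u3])
  have AL2: "L2 L A" unfolding A_def by (rule L2_add[OF H1B_L2[OF u1] L2_cmult[OF u3L2]])
  have aL2: "L2 L a" unfolding a_def by (rule L2_add[OF L2_add[OF H1B_L2[OF u1] u2L2] L2_cmult[OF u3L2]])
  have cL2: "L2 L c" unfolding c_def
    using L2_add[OF H1B_L2[OF u3] L2_cmult[OF u1L2, of "- of_real l"]] by simp
  have P: "N2 L u2 \<le> 16 * L^2 * N2 L du2" by (rule poincare[OF L u2 z2])
  have eA: "A = (\<lambda>x. a x + (-1) * u2 x)" unfolding A_def a_def by auto
  have "N2 L (\<lambda>x. a x + (-1) * u2 x) \<le> 2 * N2 L a + 2 * N2 L (\<lambda>x. (-1) * u2 x)"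
    by (rule N2_add_le[OF aL2 L2_cmult[OF u2L2]])
  then have "N2 L A \<le> 2 * N2 L a + 2 * N2 L (\<lambda>x. (-1) * u2 x)" unfolding eA .
  also have "N2 L (\<lambda>x. (-1) * u2 x) = N2 L u2" by (simp only: N2_cmult) simp
  finally have NA: "N2 L A \<le> 2 * N2 L a + 32 * L^2 * N2 L du2" using P by simp
  define Y where "Y = N2 L A + N2 L c"
  have Y0: "0 \<le> Y" unfolding Y_def by (simp add: N2_nonneg add_nonneg_nonneg)
  have "Y \<le> 2 * N2 L a + 32 * L^2 * N2 L du2 + N2 L c" unfolding Y_def using NA by simp
  also have "\<dots> \<le> (2 + 32 * L^2) * S"
    unfolding S_def using N2_nonneg[of L a] N2_nonneg[of L du2] N2_nonneg[of L c]
    by (simp add: algebra_simps)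
  finally have YS: "Y \<le> (2 + 32 * L^2) * S" .
  have X: "N2 L u1 + N2 L u3 \<le> 16 * L^2 * Y"
    unfolding Y_def A_def c_def by (rule energy2[OF L u1 u3 z1 z3])
  have nl: "(norm (complex_of_real l))^2 = l^2" by simp
  have K1: "0 \<le> 2 + 32 * l^2 * L^2" by simp
  have e1: "du1 = (\<lambda>x. A x + (- of_real l) * u3 x)" unfolding A_def by auto
  have "N2 L (\<lambda>x. A x + (- of_real l) * u3 x) \<le> 2 * N2 L A + 2 * N2 L (\<lambda>x. (- of_real l) * u3 x)"
    by (rule N2_add_le[OF AL2 L2_cmult[OF u3L2]])
  then have "N2 L du1 \<le> 2 * N2 L A + 2 * N2 L (\<lambda>x. (- of_real l) * u3 x)"
    by (subst e1)
  also have "N2 L (\<lambda>x. (- of_real l) * u3 x) = l^2 * N2 L u3" by (simp only: N2_cmult) simp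
  finally have "N2 L du1 \<le> 2 * N2 L A + 2 * l^2 * N2 L u3" by simp
  also have "\<dots> \<le> 2 * Y + 2 * l^2 * (16 * L^2 * Y)"
    using X N2_nonneg[of L u1] N2_nonneg[of L c] unfolding Y_def
    by (intro add_mono mult_left_mono) auto
  also have "\<dots> = (2 + 32 * l^2 * L^2) * Y" by (simp add: algebra_simps)
  also have "\<dots> \<le> (2 + 32 * l^2 * L^2) * ((2 + 32 * L^2) * S)" by (rule mult_left_mono[OF YS K1])
  finally show "N2 L du1 \<le> (2 + 32*l^2*L^2)*(2+32*L^2) * (N2 L (\<lambda>x. du1 x + u2 x + of_real l * u3 x) + N2 L du2 + N2 L (\<lambda>x. du3 x - of_real l * u1 x))"
    unfolding S_def a_def c_def by (simp add: mult.assoc)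
  have e3: "du3 = (\<lambda>x. c x + (of_real l) * u1 x)" unfolding c_def by auto
  have "N2 L (\<lambda>x. c x + (of_real l) * u1 x) \<le> 2 * N2 L c + 2 * N2 L (\<lambda>x. (of_real l) * u1 x)"
    by (rule N2_add_le[OF cL2 L2_cmult[OF u1L2]])
  then have "N2 L du3 \<le> 2 * N2 L c + 2 * N2 L (\<lambda>x. (of_real l) * u1 x)"
    by (subst e3)
  also have "N2 L (\<lambda>x. (of_real l) * u1 x) = l^2 * N2 L u1" by (simp only: N2_cmult) simp
  finally have "N2 L du3 \<le> 2 * N2 L c + 2 * l^2 * N2 L u1" by simp
  also have "\<dots> \<le> 2 * Y + 2 * l^2 * (16 * L^2 * Y)"
    using X N2_nonneg[of L u3] N2_nonneg[of L A] unfolding Y_def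
    by (intro add_mono mult_left_mono) auto
  also have "\<dots> = (2 + 32 * l^2 * L^2) * Y" by (simp add: algebra_simps)
  also have "\<dots> \<le> (2 + 32 * l^2 * L^2) * ((2 + 32 * L^2) * S)" by (rule mult_left_mono[OF YS K1])
  finally show "N2 L du3 \<le> (2 + 32*l^2*L^2)*(2+32*L^2) * (N2 L (\<lambda>x. du1 x + u2 x + of_real l * u3 x) + N2 L du2 + N2 L (\<lambda>x. du3 x - of_real l * u1 x))"
    unfolding S_def a_def c_def by (simp add: mult.assoc)
qed

lemma int3:
  assumes h: "h \<in> borel_measurable (LM L)" and hb: "\<And>x. x \<in> {0..L} \<Longrightarrow> norm (h x) \<le> B"
    and f: "L2 L f" and g: "L2 L g"
  shows "integrable (LM L) (\<lambda>x. h x * (f x * g x))"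
  using L2_prod_int[OF L2_mult_bounded[OF f h hb] g] by (simp add: mult.assoc)

lemma pt_id:
  fixes q rho c m lam :: real and V dV dz ddz z G f :: complex
  assumes eq: "\<i> * of_real lam * of_real rho * V - of_real c * ddz + G = of_real rho * f"
  shows "Re (2 * (of_real q * (G * cnj dz - of_real m * (dz * cnj z)))
     - of_real q * (of_real rho * (dV * cnj V + V * cnj dV) + of_real c * (ddz * cnj dz + dz * cnj ddz) - of_real m * (dz * cnj z + z * cnj dz)))
   = -2 * rho * Re (of_real q * (dV * cnj V)) - 2 * rho * Re (of_real q * (\<i> * of_real lam * V * cnj dz)) + 2 * rho * Re (of_real q * (f * cnj dz))"
proof -
  have e1: "Re (\<i> * of_real lam * of_real rho * V - of_real c * ddz + G) = Re (of_real rho * f)" using eq by simp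
  have e2: "Im (\<i> * of_real lam * of_real rho * V - of_real c * ddz + G) = Im (of_real rho * f)" using eq by simp
  show ?thesis using e1 e2 by simp algebra
qed

lemma multiplier:
  fixes lam rho c m L :: real and q dq :: "real \<Rightarrow> real"
    and z dz ddz V dV fz dfz f G :: "real \<Rightarrow> complex"
  assumes L: "L > 0"
    and q: "H1B L (\<lambda>x. complex_of_real (q x)) (\<lambda>x. complex_of_real (dq x))"
    and z: "H1B L z dz" and dz: "H1B L dz ddz" and V: "H1B L V dV" and fz: "H1B L fz dfz"
    and rel: "\<forall>x\<in>{0..L}. \<i> * of_real lam * z x - V x = fz x"
    and f: "L2 L f" and G: "L2 L G"
    and eq: "AE x in LM L. \<i> * of_real lam * of_real rho * V x - of_real c * ddz x + G x = of_real rho * f x"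
  shows "integral {0..L} (\<lambda>x. dq x * dens rho c V dz x)
     - (bracket L (\<lambda>x. q x * dens rho c V dz x) - bracket L (\<lambda>x. m * q x * (cmod (z x))^2)
        + m * integral {0..L} (\<lambda>x. dq x * (cmod (z x))^2)
        - 2 * Re (integral {0..L} (\<lambda>x. of_real (q x) * (G x * cnj (dz x) - of_real m * (dz x * cnj (z x))))))
     = 2 * rho * Re (integral {0..L} (\<lambda>x. of_real (q x) * (V x * cnj (dfz x) + f x * cnj (dz x))))"
proof -
  define Q where "Q = (\<lambda>x. complex_of_real (q x))"
  define dQ where "dQ = (\<lambda>x. complex_of_real (dq x))"
  have Q: "H1B L Q dQ" using q unfolding Q_def dQ_def .
  have L0: "L \<ge> 0" using L by simp
  note Qm = H1B_meas[OF Q] and Qb = H1B_bound[OF Q]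
  note Vm = H1B_meas[OF V] and Vb = H1B_bound[OF V]
  note zm = H1B_meas[OF z] and zb = H1B_bound[OF z]
  note dzm = H1B_meas[OF dz] and dzb = H1B_bound[OF dz]
  have dQ2: "L2 L dQ" by (rule H1B_L2[OF Q])
  have V2: "L2 L V" by (rule H1B_L2self[OF V])
  have dV2: "L2 L dV" by (rule H1B_L2[OF V])
  have z2: "L2 L z" by (rule H1B_L2self[OF z])
  have dz2: "L2 L dz" by (rule H1B_L2[OF z])
  have ddz2: "L2 L ddz" by (rule H1B_L2[OF dz])
  have dfz2: "L2 L dfz" by (rule H1B_L2[OF fz])
  note cV2 = L2_cnj[OF V2] and cdV2 = L2_cnj[OF dV2] and cz2 = L2_cnj[OF z2] and cdz2 = L2_cnj[OF dz2]
    and cdfz2 = L2_cnj[OF dfz2]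

  define W where "W = (\<lambda>x. of_real rho * (V x * cnj (V x)) + of_real c * (dz x * cnj (dz x)) - of_real m * (z x * cnj (z x)))"
  define W' where "W' = (\<lambda>x. of_real rho * (dV x * cnj (V x) + V x * cnj (dV x)) + of_real c * (ddz x * cnj (dz x) + dz x * cnj (ddz x)) - of_real m * (dz x * cnj (z x) + z x * cnj (dz x)))"
  have HW: "H1B L W W'"
    unfolding W_def W'_def
    by (intro H1B_minus H1B_add H1B_cmult H1B_mult H1B_cnj V z dz)
  have HP: "H1B L (\<lambda>x. Q x * W x) (\<lambda>x. dQ x * W x + Q x * W' x)" by (rule H1B_mult[OF Q HW])
  have FTC: "Q L * W L - Q 0 * W 0 = (\<integral>x. dQ x * W x + Q x * W' x \<partial>LM L)" by (rule H1B_FTC[OF HP L0])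
  have iP: "integrable (LM L) (\<lambda>x. dQ x * W x + Q x * W' x)" by (rule L2_int[OF H1B_L2[OF HP]])
  have idQW: "integrable (LM L) (\<lambda>x. dQ x * W x)"
    using L2_int[OF L2_mult_bounded[OF dQ2 H1B_meas[OF HW] H1B_bound[OF HW]]] by (simp add: mult.commute)
  have iQW': "integrable (LM L) (\<lambda>x. Q x * W' x)"
    using Bochner_Integration.integrable_diff[OF iP idQW] by simp
  define a1 where "a1 = (\<lambda>x. dQ x * (of_real rho * (V x * cnj (V x)) + of_real c * (dz x * cnj (dz x))))"
  define a3 where "a3 = (\<lambda>x. dQ x * (z x * cnj (z x)))"
  define a4 where "a4 = (\<lambda>x. Q x * (G x * cnj (dz x) - of_real m * (dz x * cnj (z x))))"
  have ia3: "integrable (LM L) a3"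
    using int3[OF zm zb dQ2 cz2] unfolding a3_def by (simp add: ac_simps)
  have a1eq: "a1 = (\<lambda>x. dQ x * W x + of_real m * a3 x)"
    unfolding a1_def a3_def W_def by (auto simp: algebra_simps)
  have ia1: "integrable (LM L) a1" unfolding a1eq using idQW ia3 by auto
  have ia4: "integrable (LM L) a4"
  proof -
    have "integrable (LM L) (\<lambda>x. Q x * (G x * cnj (dz x)) - of_real m * (Q x * (dz x * cnj (z x))))"
      using int3[OF Qm Qb G cdz2] int3[OF Qm Qb dz2 cz2] by auto
    then show ?thesis unfolding a4_def by (simp add: algebra_simps)
  qed
  have c1: "integral {0..L} (\<lambda>x. dq x * dens rho c V dz x) = Re (integral\<^sup>L (LM L) a1)"
  proof -
    have fe: "(\<lambda>x. dq x * dens rho c V dz x) = (\<lambda>x. Re (a1 x))"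
      unfolding a1_def dQ_def dens_def by (auto simp: norm_sq_re[symmetric] algebra_simps)
    show ?thesis unfolding fe using ia1 by (simp add: HK_Bochner)
  qed
  have c2: "bracket L (\<lambda>x. q x * dens rho c V dz x) - bracket L (\<lambda>x. m * q x * (cmod (z x))^2)
      = Re (Q L * W L - Q 0 * W 0)"
  proof -
    have pe: "Re (Q x * W x) = q x * dens rho c V dz x - m * q x * (cmod (z x))^2" for x
      unfolding Q_def W_def dens_def by (simp add: norm_sq_re[symmetric] algebra_simps)
    show ?thesis unfolding bracket_def using pe[of L] pe[of 0] by simp
  qed
  have c3: "integral {0..L} (\<lambda>x. dq x * (cmod (z x))^2) = Re (integral\<^sup>L (LM L) a3)"
  proof -
    have fe: "(\<lambda>x. dq x * (cmod (z x))^2) = (\<lambda>x. Re (a3 x))"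
      unfolding a3_def dQ_def by (auto simp: norm_sq_re[symmetric] algebra_simps)
    show ?thesis unfolding fe using ia3 by (simp add: HK_Bochner)
  qed
  have c4: "integral {0..L} (\<lambda>x. of_real (q x) * (G x * cnj (dz x) - of_real m * (dz x * cnj (z x)))) = integral\<^sup>L (LM L) a4"
    using HK_Bochner[OF ia4] unfolding a4_def Q_def .
  define b1 where "b1 = (\<lambda>x. Q x * (dV x * cnj (V x)))"
  define b2 where "b2 = (\<lambda>x. Q x * (\<i> * of_real lam * V x * cnj (dz x)))"
  define b3 where "b3 = (\<lambda>x. Q x * (f x * cnj (dz x)))"
  define b4 where "b4 = (\<lambda>x. Q x * (V x * cnj (dV x)))"
  define b5 where "b5 = (\<lambda>x. Q x * (V x * cnj (dfz x)))"
  have ib1: "integrable (LM L) b1" unfolding b1_def by (rule int3[OF Qm Qb dV2 cV2])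
  have ib2: "integrable (LM L) b2"
  proof -
    have e: "b2 = (\<lambda>x. (\<i> * of_real lam) * (Q x * (V x * cnj (dz x))))" unfolding b2_def by (auto simp: ac_simps)
    show ?thesis unfolding e by (rule integrable_mult_right[OF int3[OF Qm Qb V2 cdz2]])
  qed
  have ib3: "integrable (LM L) b3" unfolding b3_def by (rule int3[OF Qm Qb f cdz2])
  have ib4: "integrable (LM L) b4" unfolding b4_def by (rule int3[OF Qm Qb V2 cdV2])
  have ib5: "integrable (LM L) b5" unfolding b5_def by (rule int3[OF Qm Qb V2 cdfz2])
  have "integral {0..L} (\<lambda>x. dq x * dens rho c V dz x)
     - (bracket L (\<lambda>x. q x * dens rho c V dz x) - bracket L (\<lambda>x. m * q x * (cmod (z x))^2)
        + m * integral {0..L} (\<lambda>x. dq x * (cmod (z x))^2)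
        - 2 * Re (integral {0..L} (\<lambda>x. of_real (q x) * (G x * cnj (dz x) - of_real m * (dz x * cnj (z x))))))
     = Re (integral\<^sup>L (LM L) a1) - Re (\<integral>x. dQ x * W x + Q x * W' x \<partial>LM L) - m * Re (integral\<^sup>L (LM L) a3)
       + 2 * Re (integral\<^sup>L (LM L) a4)"
    unfolding c1 c2 c3 c4 FTC by simp
  also have "\<dots> = Re (2 * integral\<^sup>L (LM L) a4 - (\<integral>x. Q x * W' x \<partial>LM L))"
  proof -
    have "integral\<^sup>L (LM L) a1 = (\<integral>x. dQ x * W x \<partial>LM L) + of_real m * integral\<^sup>L (LM L) a3"
      unfolding a1eq using idQW ia3 by simp
    moreover have "(\<integral>x. dQ x * W x + Q x * W' x \<partial>LM L) = (\<integral>x. dQ x * W x \<partial>LM L) + (\<integral>x. Q x * W' x \<partial>LM L)"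
      using idQW iQW' by simp
    ultimately show ?thesis by simp
  qed
  also have "\<dots> = (\<integral>x. Re (2 * a4 x - Q x * W' x) \<partial>LM L)"
  proof -
    have ii: "integrable (LM L) (\<lambda>x. 2 * a4 x - Q x * W' x)" using ia4 iQW' by auto
    have "(\<integral>x. Re (2 * a4 x - Q x * W' x) \<partial>LM L) = Re (\<integral>x. 2 * a4 x - Q x * W' x \<partial>LM L)"
      by (rule integral_Re[OF ii])
    also have "(\<integral>x. 2 * a4 x - Q x * W' x \<partial>LM L) = 2 * integral\<^sup>L (LM L) a4 - (\<integral>x. Q x * W' x \<partial>LM L)"
      using ia4 iQW' by simp
    finally show ?thesis by simp
  qed
  also have "\<dots> = (\<integral>x. -2 * rho * Re (b1 x) - 2 * rho * Re (b2 x) + 2 * rho * Re (b3 x) \<partial>LM L)"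
  proof (rule integral_cong_AE)
    show "AE x in LM L. Re (2 * a4 x - Q x * W' x) = -2 * rho * Re (b1 x) - 2 * rho * Re (b2 x) + 2 * rho * Re (b3 x)"
      using eq
    proof eventually_elim
      case (elim x)
      then show ?case unfolding a4_def W'_def b1_def b2_def b3_def Q_def by (rule pt_id)
    qed
  next
    have ii: "integrable (LM L) (\<lambda>x. 2 * a4 x - Q x * W' x)" using ia4 iQW' by auto
    show "(\<lambda>x. Re (2 * a4 x - Q x * W' x)) \<in> borel_measurable (LM L)"
      by (rule borel_measurable_integrable, rule integrable_Re[OF ii])
  next
    have "integrable (LM L) (\<lambda>x. -2 * rho * Re (b1 x) - 2 * rho * Re (b2 x) + 2 * rho * Re (b3 x))"
      using integrable_Re[OF ib1] integrable_Re[OF ib2] integrable_Re[OF ib3] by auto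
    then show "(\<lambda>x. -2 * rho * Re (b1 x) - 2 * rho * Re (b2 x) + 2 * rho * Re (b3 x)) \<in> borel_measurable (LM L)"
      by (rule borel_measurable_integrable)
  qed
  also have "\<dots> = Re (-2 * rho * integral\<^sup>L (LM L) b1 - 2 * rho * integral\<^sup>L (LM L) b2 + 2 * rho * integral\<^sup>L (LM L) b3)"
    using ib1 ib2 ib3 by simp
  finally have step1: "integral {0..L} (\<lambda>x. dq x * dens rho c V dz x)
     - (bracket L (\<lambda>x. q x * dens rho c V dz x) - bracket L (\<lambda>x. m * q x * (cmod (z x))^2)
        + m * integral {0..L} (\<lambda>x. dq x * (cmod (z x))^2)
        - 2 * Re (integral {0..L} (\<lambda>x. of_real (q x) * (G x * cnj (dz x) - of_real m * (dz x * cnj (z x))))))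
     = Re (-2 * rho * integral\<^sup>L (LM L) b1 - 2 * rho * integral\<^sup>L (LM L) b2 + 2 * rho * integral\<^sup>L (LM L) b3)" .
  have HQV: "H1B L (\<lambda>x. Q x * V x) (\<lambda>x. dQ x * V x + Q x * dV x)" by (rule H1B_mult[OF Q V])
  have F1: "H1B L (\<lambda>x. cnj (\<i> * of_real lam * z x)) (\<lambda>x. cnj (\<i> * of_real lam * dz x))"
    by (rule H1B_cnj[OF H1B_cmult[OF z]])
  have F2: "H1B L (\<lambda>x. cnj (\<i> * of_real lam * z x)) (\<lambda>x. cnj (dV x + dfz x))"
  proof (rule H1B_cnj, rule H1B_cong[OF H1B_add[OF V fz] L0])
    fix x assume "x \<in> {0..L}"
    then show "V x + fz x = \<i> * of_real lam * z x" using rel by (simp add: algebra_simps)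
  qed
  have U: "(\<integral>x. Q x * V x * cnj (\<i> * of_real lam * dz x) \<partial>LM L) = (\<integral>x. Q x * V x * cnj (dV x + dfz x) \<partial>LM L)"
    by (rule H1B_unique[OF F1 F2 HQV L0])
  have b2eq: "integral\<^sup>L (LM L) b2 = - (\<integral>x. Q x * V x * cnj (\<i> * of_real lam * dz x) \<partial>LM L)"
  proof -
    have "b2 = (\<lambda>x. - (Q x * V x * cnj (\<i> * of_real lam * dz x)))" unfolding b2_def by (auto simp: algebra_simps)
    then show ?thesis by simp
  qed
  have "(\<integral>x. Q x * V x * cnj (dV x + dfz x) \<partial>LM L) = integral\<^sup>L (LM L) b4 + integral\<^sup>L (LM L) b5"
  proof -
    have "(\<lambda>x. Q x * V x * cnj (dV x + dfz x)) = (\<lambda>x. b4 x + b5 x)" unfolding b4_def b5_def by (auto simp: algebra_simps)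
    then show ?thesis using ib4 ib5 by simp
  qed
  note Z = this
  have B2: "integral\<^sup>L (LM L) b2 = - (integral\<^sup>L (LM L) b4 + integral\<^sup>L (LM L) b5)"
    unfolding b2eq U Z by (rule refl)
  have B1: "integral\<^sup>L (LM L) b1 = cnj (integral\<^sup>L (LM L) b4)"
  proof -
    have "b1 = (\<lambda>x. cnj (b4 x))" unfolding b1_def b4_def Q_def by auto
    then show ?thesis by simp
  qed
  have c5: "integral {0..L} (\<lambda>x. of_real (q x) * (V x * cnj (dfz x) + f x * cnj (dz x))) = integral\<^sup>L (LM L) b5 + integral\<^sup>L (LM L) b3"
  proof -
    have fe: "(\<lambda>x. of_real (q x) * (V x * cnj (dfz x) + f x * cnj (dz x))) = (\<lambda>x. b5 x + b3 x)"
      unfolding b5_def b3_def Q_def by (auto simp: algebra_simps)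
    show ?thesis unfolding fe using ib5 ib3 by (simp add: HK_Bochner)
  qed
  show ?thesis unfolding step1 c5 B1 B2 by (simp add: algebra_simps)
qed

lemma cross:
  fixes g1 g2 g3 :: "real \<Rightarrow> complex"
  assumes i1: "integrable (LM L) g1" and i2: "integrable (LM L) g2" and i3: "integrable (LM L) g3"
    and pt: "\<And>x. Re (g3 x) = \<alpha> * Re (g1 x) + \<beta> * Re (g2 x)"
  shows "Re (integral {0..L} g3) = \<alpha> * Re (integral {0..L} g1) + \<beta> * Re (integral {0..L} g2)"
proof -
  have "Re (integral {0..L} g3) = (\<integral>x. Re (g3 x) \<partial>LM L)"
    unfolding HK_Bochner[OF i3] by (rule integral_Re[OF i3, symmetric])
  also have "\<dots> = (\<integral>x. \<alpha> * Re (g1 x) + \<beta> * Re (g2 x) \<partial>LM L)" unfolding pt ..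
  also have "\<dots> = \<alpha> * (\<integral>x. Re (g1 x) \<partial>LM L) + \<beta> * (\<integral>x. Re (g2 x) \<partial>LM L)"
    using integrable_Re[OF i1] integrable_Re[OF i2] by simp
  also have "\<dots> = \<alpha> * Re (integral {0..L} g1) + \<beta> * Re (integral {0..L} g2)"
    unfolding HK_Bochner[OF i1] HK_Bochner[OF i2] integral_Re[OF i1] integral_Re[OF i2] ..
  finally show ?thesis .
qed

lemma N2_bounded_mult:
  assumes f: "L2 L f" and hb: "\<And>x. x \<in> {0..L} \<Longrightarrow> norm (h x) \<le> B" and hm: "h \<in> borel_measurable (LM L)"
  shows "N2 L (\<lambda>x. h x * f x) \<le> B^2 * N2 L f"
proof -
  have "N2 L (\<lambda>x. h x * f x) \<le> (\<integral>x. B^2 * (norm (f x))^2 \<partial>LM L)"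
    unfolding N2_def
  proof (rule integral_mono)
    show "integrable (LM L) (\<lambda>x. (cmod (h x * f x))\<^sup>2)" by (rule L2_sq[OF L2_mult_bounded[OF f hm hb]])
    show "integrable (LM L) (\<lambda>x. B\<^sup>2 * (cmod (f x))\<^sup>2)" using L2_sq[OF f] by auto
    fix x assume "x \<in> space (LM L)"
    then have x: "x \<in> {0..L}" by simp
    have "(norm (h x))^2 \<le> B^2" using hb[OF x] by (simp add: power_mono)
    then show "(cmod (h x * f x))\<^sup>2 \<le> B\<^sup>2 * (cmod (f x))\<^sup>2"
      by (simp add: norm_mult power_mult_distrib mult_right_mono)
  qed
  also have "\<dots> = B^2 * N2 L f" unfolding N2_def by simp
  finally show ?thesis .
qed

lemma rem_bound:
  fixes q dq :: "real \<Rightarrow> real" and rho :: real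
  assumes L: "L > 0" and q: "H1B L (\<lambda>x. complex_of_real (q x)) (\<lambda>x. complex_of_real (dq x))"
    and V: "L2 L V" and dfz: "L2 L dfz" and f: "L2 L f" and dz: "L2 L dz" and rho: "rho \<ge> 0"
  defines "Bq \<equiv> norm (complex_of_real (q 0)) + (\<integral>t. norm (complex_of_real (dq t)) \<partial>LM L)"
  shows "\<bar>2 * rho * Re (integral {0..L} (\<lambda>x. of_real (q x) * (V x * cnj (dfz x) + f x * cnj (dz x))))\<bar>
    \<le> 2 * rho * Bq * (sqrt (N2 L V) * sqrt (N2 L dfz) + sqrt (N2 L f) * sqrt (N2 L dz))"
proof -
  define Q where "Q = (\<lambda>x. complex_of_real (q x))"
  have Qm: "Q \<in> borel_measurable (LM L)" unfolding Q_def by (rule H1B_meas[OF q])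
  have Qb: "\<And>x. x \<in> {0..L} \<Longrightarrow> norm (Q x) \<le> Bq" unfolding Q_def Bq_def by (rule H1B_bound[OF q])
  have Bq0: "0 \<le> Bq" using Qb[of 0] L by (meson atLeastAtMost_iff less_imp_le norm_ge_zero order.trans order_refl)
  have QV: "L2 L (\<lambda>x. Q x * V x)" by (rule L2_mult_bounded[OF V Qm Qb])
  have Qf: "L2 L (\<lambda>x. Q x * f x)" by (rule L2_mult_bounded[OF f Qm Qb])
  have i1: "integrable (LM L) (\<lambda>x. Q x * V x * cnj (dfz x))" by (rule L2_prod_int[OF QV L2_cnj[OF dfz]])
  have i2: "integrable (LM L) (\<lambda>x. Q x * f x * cnj (dz x))" by (rule L2_prod_int[OF Qf L2_cnj[OF dz]])
  have "integral {0..L} (\<lambda>x. of_real (q x) * (V x * cnj (dfz x) + f x * cnj (dz x)))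
      = (\<integral>x. Q x * V x * cnj (dfz x) + Q x * f x * cnj (dz x) \<partial>LM L)"
  proof -
    have fe: "(\<lambda>x. of_real (q x) * (V x * cnj (dfz x) + f x * cnj (dz x))) = (\<lambda>x. Q x * V x * cnj (dfz x) + Q x * f x * cnj (dz x))"
      unfolding Q_def by (auto simp: algebra_simps)
    show ?thesis unfolding fe using i1 i2 by (simp add: HK_Bochner)
  qed
  also have "\<dots> = (\<integral>x. Q x * V x * cnj (dfz x) \<partial>LM L) + (\<integral>x. Q x * f x * cnj (dz x) \<partial>LM L)"
    using i1 i2 by simp
  finally have J: "integral {0..L} (\<lambda>x. of_real (q x) * (V x * cnj (dfz x) + f x * cnj (dz x)))
      = (\<integral>x. Q x * V x * cnj (dfz x) \<partial>LM L) + (\<integral>x. Q x * f x * cnj (dz x) \<partial>LM L)" .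
  have n1: "norm (\<integral>x. Q x * V x * cnj (dfz x) \<partial>LM L) \<le> Bq * (sqrt (N2 L V) * sqrt (N2 L dfz))"
  proof -
    have "norm (\<integral>x. Q x * V x * cnj (dfz x) \<partial>LM L) \<le> sqrt (N2 L (\<lambda>x. Q x * V x)) * sqrt (N2 L (\<lambda>x. cnj (dfz x)))"
      by (rule CS[OF QV L2_cnj[OF dfz]])
    also have "sqrt (N2 L (\<lambda>x. cnj (dfz x))) = sqrt (N2 L dfz)" unfolding N2_def by simp
    also have "sqrt (N2 L (\<lambda>x. Q x * V x)) \<le> Bq * sqrt (N2 L V)"
    proof -
      have "sqrt (N2 L (\<lambda>x. Q x * V x)) \<le> sqrt (Bq^2 * N2 L V)"
        by (rule real_sqrt_le_mono[OF N2_bounded_mult[OF V Qb Qm]])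
      also have "\<dots> = Bq * sqrt (N2 L V)" using Bq0 by (simp add: real_sqrt_mult)
      finally show ?thesis .
    qed
    then have "sqrt (N2 L (\<lambda>x. Q x * V x)) * sqrt (N2 L dfz) \<le> Bq * sqrt (N2 L V) * sqrt (N2 L dfz)"
      by (rule mult_right_mono) (simp add: N2_nonneg)
    finally show ?thesis by (simp add: mult.assoc)
  qed
  have n2: "norm (\<integral>x. Q x * f x * cnj (dz x) \<partial>LM L) \<le> Bq * (sqrt (N2 L f) * sqrt (N2 L dz))"
  proof -
    have "norm (\<integral>x. Q x * f x * cnj (dz x) \<partial>LM L) \<le> sqrt (N2 L (\<lambda>x. Q x * f x)) * sqrt (N2 L (\<lambda>x. cnj (dz x)))"
      by (rule CS[OF Qf L2_cnj[OF dz]])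
    also have "sqrt (N2 L (\<lambda>x. cnj (dz x))) = sqrt (N2 L dz)" unfolding N2_def by simp
    also have "sqrt (N2 L (\<lambda>x. Q x * f x)) \<le> Bq * sqrt (N2 L f)"
    proof -
      have "sqrt (N2 L (\<lambda>x. Q x * f x)) \<le> sqrt (Bq^2 * N2 L f)"
        by (rule real_sqrt_le_mono[OF N2_bounded_mult[OF f Qb Qm]])
      also have "\<dots> = Bq * sqrt (N2 L f)" using Bq0 by (simp add: real_sqrt_mult)
      finally show ?thesis .
    qed
    then have "sqrt (N2 L (\<lambda>x. Q x * f x)) * sqrt (N2 L dz) \<le> Bq * sqrt (N2 L f) * sqrt (N2 L dz)"
      by (rule mult_right_mono) (simp add: N2_nonneg)
    finally show ?thesis by (simp add: mult.assoc)
  qed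
  have "\<bar>Re (integral {0..L} (\<lambda>x. of_real (q x) * (V x * cnj (dfz x) + f x * cnj (dz x))))\<bar>
      \<le> norm (integral {0..L} (\<lambda>x. of_real (q x) * (V x * cnj (dfz x) + f x * cnj (dz x))))"
    by (rule abs_Re_le_cmod)
  also have "\<dots> \<le> norm (\<integral>x. Q x * V x * cnj (dfz x) \<partial>LM L) + norm (\<integral>x. Q x * f x * cnj (dz x) \<partial>LM L)"
    unfolding J by (rule norm_triangle_ineq)
  also have "\<dots> \<le> Bq * (sqrt (N2 L V) * sqrt (N2 L dfz) + sqrt (N2 L f) * sqrt (N2 L dz))"
    using n1 n2 by (simp add: distrib_left)
  finally have "\<bar>Re (integral {0..L} (\<lambda>x. of_real (q x) * (V x * cnj (dfz x) + f x * cnj (dz x))))\<bar>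
      \<le> Bq * (sqrt (N2 L V) * sqrt (N2 L dfz) + sqrt (N2 L f) * sqrt (N2 L dz))" .
  then have "2 * rho * \<bar>Re (integral {0..L} (\<lambda>x. of_real (q x) * (V x * cnj (dfz x) + f x * cnj (dz x))))\<bar>
      \<le> 2 * rho * (Bq * (sqrt (N2 L V) * sqrt (N2 L dfz) + sqrt (N2 L f) * sqrt (N2 L dz)))"
    using rho by (simp add: mult_left_mono)
  then show ?thesis using rho by (simp add: abs_mult mult.assoc)
qed

lemma hnorm_bounds:
  fixes \<kappa> \<rho>1 b \<rho>2 k0 l L :: real and u1 du1 u2 du2 u3 du3 v1 v2 v3 :: "real \<Rightarrow> complex"
  assumes L: "L > 0" and pos: "\<kappa> > 0" "\<rho>1 > 0" "b > 0" "\<rho>2 > 0" "k0 > 0"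
    and u1: "H1B L u1 du1" and u2: "H1B L u2 du2" and u3: "H1B L u3 du3"
    and z1: "u1 L = 0" and z2: "u2 L = 0" and z3: "u3 L = 0"
    and v1: "L2 L v1" and v2: "L2 L v2" and v3: "L2 L v3"
  defines "K2 \<equiv> ((2 + 32*l^2*L^2)*(2+32*L^2) + 1) / min \<kappa> (min \<rho>1 (min b (min \<rho>2 k0)))"
    and "Hn \<equiv> Hnorm L \<kappa> \<rho>1 b \<rho>2 k0 l u1 du1 u2 du2 u3 du3 v1 v2 v3"
  shows "N2 L du1 \<le> K2 * Hn^2 \<and> N2 L du2 \<le> K2 * Hn^2 \<and> N2 L du3 \<le> K2 * Hn^2
    \<and> N2 L v1 \<le> K2 * Hn^2 \<and> N2 L v2 \<le> K2 * Hn^2 \<and> N2 L v3 \<le> K2 * Hn^2"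
proof -
  define \<mu> where "\<mu> = min \<kappa> (min \<rho>1 (min b (min \<rho>2 k0)))"
  define K where "K = (2 + 32*l^2*L^2)*(2+32*L^2)"
  have mu: "\<mu> > 0" unfolding \<mu>_def using pos by simp
  have K0: "K \<ge> 0" unfolding K_def by simp
  have K2: "K2 = (K + 1) / \<mu>" unfolding K2_def K_def \<mu>_def ..
  define a where "a = (\<lambda>x. du1 x + u2 x + of_real l * u3 x)"
  define c where "c = (\<lambda>x. du3 x - of_real l * u1 x)"
  have u1L2: "L2 L u1" by (rule H1B_L2self[OF u1])
  have u2L2: "L2 L u2" by (rule H1B_L2self[OF u2])
  have u3L2: "L2 L u3" by (rule H1B_L2self[OF u3])
  have aL2: "L2 L a" unfolding a_def by (rule L2_add[OF L2_add[OF H1B_L2[OF u1] u2L2] L2_cmult[OF u3L2]])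
  have cL2: "L2 L c" unfolding c_def
    using L2_add[OF H1B_L2[OF u3] L2_cmult[OF u1L2, of "- of_real l"]] by simp
  have du2L2: "L2 L du2" by (rule H1B_L2[OF u2])
  define T where "T = N2 L a + N2 L v1 + N2 L du2 + N2 L v2 + N2 L v3 + N2 L c"
  have S0: "0 \<le> \<kappa> * N2 L a + \<rho>1 * N2 L v1 + b * N2 L du2 + \<rho>2 * N2 L v2 + \<rho>1 * N2 L v3 + k0 * N2 L c"
    using pos N2_nonneg[of L a] N2_nonneg[of L v1] N2_nonneg[of L du2] N2_nonneg[of L v2] N2_nonneg[of L v3] N2_nonneg[of L c]
    by simp
  have Hn2: "Hn^2 = \<kappa> * N2 L a + \<rho>1 * N2 L v1 + b * N2 L du2 + \<rho>2 * N2 L v2 + \<rho>1 * N2 L v3 + k0 * N2 L c"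
    unfolding Hn_def Hnorm_def L2sq_eq[OF aL2[unfolded a_def]] L2sq_eq[OF cL2[unfolded c_def]]
      L2sq_eq[OF v1] L2sq_eq[OF v2] L2sq_eq[OF v3] L2sq_eq[OF du2L2]
    using S0 unfolding N2_def a_def c_def by simp
  have "\<mu> * T \<le> Hn^2"
  proof -
    have "\<mu> * T = \<mu> * N2 L a + \<mu> * N2 L v1 + \<mu> * N2 L du2 + \<mu> * N2 L v2 + \<mu> * N2 L v3 + \<mu> * N2 L c"
      unfolding T_def by (simp add: algebra_simps)
    also have "\<dots> \<le> \<kappa> * N2 L a + \<rho>1 * N2 L v1 + b * N2 L du2 + \<rho>2 * N2 L v2 + \<rho>1 * N2 L v3 + k0 * N2 L c"
      by (intro add_mono mult_right_mono) (auto simp: \<mu>_def N2_nonneg)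
    finally show ?thesis unfolding Hn2 .
  qed
  then have T: "T \<le> Hn^2 / \<mu>" using mu by (simp add: le_divide_eq mult.commute)
  have T0: "0 \<le> T" unfolding T_def by (simp add: N2_nonneg add_nonneg_nonneg)
  have "T \<le> (K + 1) * T" using K0 T0 by (simp add: mult_le_cancel_right1 distrib_right)
  also have "\<dots> \<le> (K + 1) * (Hn^2 / \<mu>)" using K0 T by (intro mult_left_mono) auto
  also have "\<dots> = K2 * Hn^2" unfolding K2 by simp
  finally have TK: "T \<le> K2 * Hn^2" .
  have "K * T \<le> (K + 1) * T" using T0 by (simp add: distrib_right)
  also have "\<dots> \<le> (K + 1) * (Hn^2 / \<mu>)" using K0 T by (intro mult_left_mono) auto
  also have "\<dots> = K2 * Hn^2" unfolding K2 by simp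
  finally have KTK: "K * T \<le> K2 * Hn^2" .
  have NE1: "N2 L du1 \<le> K * (N2 L a + N2 L du2 + N2 L c)"
    unfolding K_def a_def c_def by (rule NE(1)[OF L u1 u2 u3 z1 z2 z3])
  have NE3: "N2 L du3 \<le> K * (N2 L a + N2 L du2 + N2 L c)"
    unfolding K_def a_def c_def by (rule NE(2)[OF L u1 u2 u3 z1 z2 z3])
  have sub: "N2 L a + N2 L du2 + N2 L c \<le> T"
    unfolding T_def using N2_nonneg[of L v1] N2_nonneg[of L v2] N2_nonneg[of L v3] by simp
  have "K * (N2 L a + N2 L du2 + N2 L c) \<le> K * T" by (rule mult_left_mono[OF sub K0])
  then have A: "K * (N2 L a + N2 L du2 + N2 L c) \<le> K2 * Hn^2" using KTK by linarith
  have B: "N2 L du2 \<le> T" "N2 L v1 \<le> T" "N2 L v2 \<le> T" "N2 L v3 \<le> T"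
    unfolding T_def using N2_nonneg[of L v1] N2_nonneg[of L v2] N2_nonneg[of L v3] N2_nonneg[of L a]
      N2_nonneg[of L c] N2_nonneg[of L du2] by simp_all
  show ?thesis using NE1 NE3 A B TK by linarith
qed


lemma L2_diff: "L2 L f \<Longrightarrow> L2 L g \<Longrightarrow> L2 L (\<lambda>x. f x - g x)"
  using L2_add[of L f "\<lambda>x. (-1) * g x"] L2_cmult[of L g "-1"] by simp

lemma L2sq_nonneg: "0 \<le> L2sq L g"
  unfolding L2sq_def
  by (cases "(\<lambda>x. (cmod (g x))^2) integrable_on {0..L}") (auto intro: integral_nonneg simp: not_integrable_integral)

lemma Hnorm_nonneg:
  assumes "\<kappa> > 0" "\<rho>1 > 0" "b > 0" "\<rho>2 > 0" "k0 > 0"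
  shows "0 \<le> Hnorm L \<kappa> \<rho>1 b \<rho>2 k0 l u1 du1 u2 du2 u3 du3 v1 v2 v3"
  unfolding Hnorm_def using assms
  by (intro real_sqrt_ge_zero add_nonneg_nonneg mult_nonneg_nonneg) (auto intro: L2sq_nonneg less_imp_le)

lemma sqrt_bound:
  fixes x K N :: real
  assumes "x \<le> K * N^2" "0 \<le> N" "0 \<le> K"
  shows "sqrt x \<le> sqrt K * N"
proof -
  have "sqrt x \<le> sqrt (K * N^2)" using assms(1) by (rule real_sqrt_le_mono)
  also have "\<dots> = sqrt K * N" using assms(2,3) by (simp add: real_sqrt_mult)
  finally show ?thesis .
qed

lemma final_arith:
  fixes R rho Bq a b c d s NU NF C :: real
  assumes R: "\<bar>R\<bar> \<le> 2 * rho * Bq * (sqrt a * sqrt b + sqrt c * sqrt d)"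
    and a: "sqrt a \<le> s * NU" and b: "sqrt b \<le> s * NF" and c: "sqrt c \<le> s * NF" and d: "sqrt d \<le> s * NU"
    and nn: "0 \<le> a" "0 \<le> b" "0 \<le> c" "0 \<le> d" "0 \<le> rho" "0 \<le> Bq" "0 \<le> NU" "0 \<le> NF"
    and C: "4 * rho * Bq * s^2 \<le> C"
  shows "\<bar>R\<bar> \<le> C * NU * NF"
proof -
  have sNU: "0 \<le> s * NU" using a real_sqrt_ge_zero[OF nn(1)] by linarith
  have sNF: "0 \<le> s * NF" using b real_sqrt_ge_zero[OF nn(2)] by linarith
  have "sqrt a * sqrt b \<le> (s * NU) * (s * NF)"
    by (rule mult_mono[OF a b]) (use nn sNU in auto)
  moreover have "sqrt c * sqrt d \<le> (s * NF) * (s * NU)"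
    by (rule mult_mono[OF c d]) (use nn sNF in auto)
  ultimately have "sqrt a * sqrt b + sqrt c * sqrt d \<le> 2 * s^2 * (NU * NF)"
    by (simp add: power2_eq_square algebra_simps)
  then have "2 * rho * Bq * (sqrt a * sqrt b + sqrt c * sqrt d) \<le> 2 * rho * Bq * (2 * s^2 * (NU * NF))"
    using nn by (intro mult_left_mono) auto
  also have "\<dots> = (4 * rho * Bq * s^2) * (NU * NF)" by simp
  also have "\<dots> \<le> C * (NU * NF)" using nn by (intro mult_right_mono[OF C]) auto
  finally show ?thesis using R by (simp add: mult.assoc)
qed

lemma intq2:
  assumes hm: "h \<in> borel_measurable (LM L)" and hb: "\<And>x. x \<in> {0..L} \<Longrightarrow> norm (h x) \<le> B"
    and f: "L2 L f" and g: "L2 L g"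
  shows "integrable (LM L) (\<lambda>x. h x * f x * g x)"
  by (rule L2_prod_int[OF L2_mult_bounded[OF f hm hb] g])

lemma int_qdiff:
  assumes hm: "h \<in> borel_measurable (LM L)" and hb: "\<And>x. x \<in> {0..L} \<Longrightarrow> norm (h x) \<le> B"
    and f1: "L2 L f1" and g1: "L2 L g1" and f2: "L2 L f2" and g2: "L2 L g2"
  shows "integrable (LM L) (\<lambda>x. h x * (f1 x * g1 x - c * (f2 x * g2 x)))"
proof -
  have e: "(\<lambda>x. h x * (f1 x * g1 x - c * (f2 x * g2 x))) = (\<lambda>x. h x * f1 x * g1 x - c * (h x * f2 x * g2 x))"
    by (auto simp: algebra_simps)
  show ?thesis unfolding e using intq2[OF hm hb f1 g1] intq2[OF hm hb f2 g2] by auto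
qed

theorem lemma3p3:
  fixes L \<rho>\<^sub>1 \<rho>\<^sub>2 \<kappa> b k\<^sub>0 l \<gamma>\<^sub>1 \<gamma>\<^sub>2 \<gamma>\<^sub>3 :: real
    and q dq :: "real \<Rightarrow> real"
  assumes pos: "L > 0" "\<rho>\<^sub>1 > 0" "\<rho>\<^sub>2 > 0" "\<kappa> > 0" "b > 0" "k\<^sub>0 > 0" "l > 0"
    and gpos: "\<gamma>\<^sub>1 > 0" "\<gamma>\<^sub>2 > 0" "\<gamma>\<^sub>3 > 0"
    and q: "H1 L q dq"
  shows "\<exists>C>0. \<forall>(lam::real)
      (\<phi>::real \<Rightarrow> complex) \<phi>x \<phi>xx \<psi> \<psi>x \<psi>xx w wx wxx \<Phi> \<Phi>x \<Psi> \<Psi>x W Wx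
      f1 f1x f2 f2x f3 f3x f4 f5 f6.
      H2 L \<phi> \<phi>x \<phi>xx \<and> \<phi> L = 0 \<and> H2 L \<psi> \<psi>x \<psi>xx \<and> \<psi> L = 0 \<and> H2 L w wx wxx \<and> w L = 0 \<and>
      H1L L \<Phi> \<Phi>x \<and> H1L L \<Psi> \<Psi>x \<and> H1L L W Wx \<and>
      of_real \<kappa> * (\<phi>x 0 + \<psi> 0 + of_real l * w 0) = of_real \<gamma>\<^sub>1 * \<Phi> 0 \<and>
      of_real b * \<psi>x 0 = of_real \<gamma>\<^sub>2 * \<Psi> 0 \<and>
      of_real k\<^sub>0 * (wx 0 - of_real l * \<phi> 0) = of_real \<gamma>\<^sub>3 * W 0 \<and>
      H1L L f1 f1x \<and> H1L L f2 f2x \<and> H1L L f3 f3x \<and> sqint L f4 \<and> sqint L f5 \<and> sqint L f6 \<and>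
      (\<forall>x\<in>{0..L}. \<i> * of_real lam * \<phi> x - \<Phi> x = f1 x) \<and>
      (\<forall>x\<in>{0..L}. \<i> * of_real lam * \<psi> x - \<Psi> x = f2 x) \<and>
      (\<forall>x\<in>{0..L}. \<i> * of_real lam * w x - W x = f3 x) \<and>
      (AE x in lebesgue_on {0..L}.
         \<i> * of_real lam * of_real \<rho>\<^sub>1 * \<Phi> x
         - of_real \<kappa> * (\<phi>xx x + \<psi>x x + of_real l * wx x)
         - of_real k\<^sub>0 * of_real l * (wx x - of_real l * \<phi> x) = of_real \<rho>\<^sub>1 * f4 x) \<and>
      (AE x in lebesgue_on {0..L}.
         \<i> * of_real lam * of_real \<rho>\<^sub>2 * \<Psi> x - of_real b * \<psi>xx x
         + of_real \<kappa> * (\<phi>x x + \<psi> x + of_real l * w x) = of_real \<rho>\<^sub>2 * f5 x) \<and>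
      (AE x in lebesgue_on {0..L}.
         \<i> * of_real lam * of_real \<rho>\<^sub>1 * W x
         - of_real k\<^sub>0 * (wxx x - of_real l * \<phi>x x)
         + of_real \<kappa> * of_real l * (\<phi>x x + \<psi> x + of_real l * w x) = of_real \<rho>\<^sub>1 * f6 x)
      \<longrightarrow>
      (let NU = Hnorm L \<kappa> \<rho>\<^sub>1 b \<rho>\<^sub>2 k\<^sub>0 l \<phi> \<phi>x \<psi> \<psi>x w wx \<Phi> \<Psi> W;
           NF = Hnorm L \<kappa> \<rho>\<^sub>1 b \<rho>\<^sub>2 k\<^sub>0 l f1 f1x f2 f2x f3 f3x f4 f5 f6;
           R1 = integral {0..L} (\<lambda>x. dq x * dens \<rho>\<^sub>1 \<kappa> \<Phi> \<phi>x x)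
              - (bracket L (\<lambda>x. q x * dens \<rho>\<^sub>1 \<kappa> \<Phi> \<phi>x x)
                 - bracket L (\<lambda>x. k\<^sub>0 * l^2 * q x * (cmod (\<phi> x))^2)
                 + 2 * \<kappa> * Re (integral {0..L} (\<lambda>x. of_real (q x) * \<psi>x x * cnj (\<phi>x x)))
                 + k\<^sub>0 * l^2 * integral {0..L} (\<lambda>x. dq x * (cmod (\<phi> x))^2)
                 + 2 * (\<kappa> + k\<^sub>0) * l * Re (integral {0..L} (\<lambda>x. of_real (q x) * wx x * cnj (\<phi>x x))));
           R2 = integral {0..L} (\<lambda>x. dq x * dens \<rho>\<^sub>2 b \<Psi> \<psi>x x)
              - (bracket L (\<lambda>x. q x * dens \<rho>\<^sub>2 b \<Psi> \<psi>x x)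
                 - bracket L (\<lambda>x. \<kappa> * q x * (cmod (\<psi> x))^2)
                 - 2 * \<kappa> * Re (integral {0..L} (\<lambda>x. of_real (q x) * \<phi>x x * cnj (\<psi>x x)))
                 + \<kappa> * integral {0..L} (\<lambda>x. dq x * (cmod (\<psi> x))^2)
                 - 2 * \<kappa> * l * Re (integral {0..L} (\<lambda>x. of_real (q x) * w x * cnj (\<psi>x x))));
           R3 = integral {0..L} (\<lambda>x. dq x * dens \<rho>\<^sub>1 k\<^sub>0 W wx x)
              - (bracket L (\<lambda>x. q x * dens \<rho>\<^sub>1 k\<^sub>0 W wx x)
                 - bracket L (\<lambda>x. \<kappa> * l^2 * q x * (cmod (w x))^2)
                 - 2 * \<kappa> * l * Re (integral {0..L} (\<lambda>x. of_real (q x) * \<psi> x * cnj (wx x)))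
                 - 2 * (\<kappa> + k\<^sub>0) * l * Re (integral {0..L} (\<lambda>x. of_real (q x) * \<phi>x x * cnj (wx x)))
                 + \<kappa> * l^2 * integral {0..L} (\<lambda>x. dq x * (cmod (w x))^2))
       in \<bar>R1\<bar> \<le> C * NU * NF \<and> \<bar>R2\<bar> \<le> C * NU * NF \<and> \<bar>R3\<bar> \<le> C * NU * NF)"

proof -
  have L: "L > 0" using pos by simp
  have L0: "L \<ge> 0" using L by simp
  have qB: "H1B L (\<lambda>x. complex_of_real (q x)) (\<lambda>x. complex_of_real (dq x))" by (rule H1_real_H1B[OF q])
  define Bq where "Bq = norm (complex_of_real (q 0)) + (\<integral>t. norm (complex_of_real (dq t)) \<partial>LM L)"
  have Bq0: "0 \<le> Bq" unfolding Bq_def by (intro add_nonneg_nonneg) auto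
  define K2 where "K2 = ((2 + 32*l^2*L^2)*(2+32*L^2) + 1) / min \<kappa> (min \<rho>\<^sub>1 (min b (min \<rho>\<^sub>2 k\<^sub>0)))"
  have K20: "0 \<le> K2" unfolding K2_def using pos by simp
  define C where "C = 4 * (\<rho>\<^sub>1 + \<rho>\<^sub>2) * Bq * K2 + 1"
  have "0 \<le> 4 * (\<rho>\<^sub>1 + \<rho>\<^sub>2) * Bq * K2" using pos Bq0 K20 by (intro mult_nonneg_nonneg) auto
  then have C0: "C > 0" unfolding C_def by linarith
  have sK: "(sqrt K2)^2 = K2" using K20 by simp
  have p1: "0 \<le> 4 * \<rho>\<^sub>1 * Bq * K2" using pos Bq0 K20 by (intro mult_nonneg_nonneg) auto
  have p2: "0 \<le> 4 * \<rho>\<^sub>2 * Bq * K2" using pos Bq0 K20 by (intro mult_nonneg_nonneg) auto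
  have Csplit: "C = 4 * \<rho>\<^sub>1 * Bq * K2 + 4 * \<rho>\<^sub>2 * Bq * K2 + 1" unfolding C_def by (simp add: algebra_simps)
  have Cge1: "4 * \<rho>\<^sub>1 * Bq * (sqrt K2)^2 \<le> C" unfolding sK Csplit using p2 by linarith
  have Cge2: "4 * \<rho>\<^sub>2 * Bq * (sqrt K2)^2 \<le> C" unfolding sK Csplit using p1 by linarith
  have Qm: "(\<lambda>x. complex_of_real (q x)) \<in> borel_measurable (LM L)" by (rule H1B_meas[OF qB])
  have Qb: "\<And>x. x \<in> {0..L} \<Longrightarrow> norm (complex_of_real (q x)) \<le> Bq" unfolding Bq_def by (rule H1B_bound[OF qB])
  have main: "(let NU = Hnorm L \<kappa> \<rho>\<^sub>1 b \<rho>\<^sub>2 k\<^sub>0 l \<phi> \<phi>x \<psi> \<psi>x w wx \<Phi> \<Psi> W;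
             NF = Hnorm L \<kappa> \<rho>\<^sub>1 b \<rho>\<^sub>2 k\<^sub>0 l f1 f1x f2 f2x f3 f3x f4 f5 f6;
             R1 = integral {0..L} (\<lambda>x. dq x * dens \<rho>\<^sub>1 \<kappa> \<Phi> \<phi>x x)
                - (bracket L (\<lambda>x. q x * dens \<rho>\<^sub>1 \<kappa> \<Phi> \<phi>x x)
                   - bracket L (\<lambda>x. k\<^sub>0 * l^2 * q x * (cmod (\<phi> x))^2)
                   + 2 * \<kappa> * Re (integral {0..L} (\<lambda>x. of_real (q x) * \<psi>x x * cnj (\<phi>x x)))
                   + k\<^sub>0 * l^2 * integral {0..L} (\<lambda>x. dq x * (cmod (\<phi> x))^2)
                   + 2 * (\<kappa> + k\<^sub>0) * l * Re (integral {0..L} (\<lambda>x. of_real (q x) * wx x * cnj (\<phi>x x))));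
             R2 = integral {0..L} (\<lambda>x. dq x * dens \<rho>\<^sub>2 b \<Psi> \<psi>x x)
                - (bracket L (\<lambda>x. q x * dens \<rho>\<^sub>2 b \<Psi> \<psi>x x)
                   - bracket L (\<lambda>x. \<kappa> * q x * (cmod (\<psi> x))^2)
                   - 2 * \<kappa> * Re (integral {0..L} (\<lambda>x. of_real (q x) * \<phi>x x * cnj (\<psi>x x)))
                   + \<kappa> * integral {0..L} (\<lambda>x. dq x * (cmod (\<psi> x))^2)
                   - 2 * \<kappa> * l * Re (integral {0..L} (\<lambda>x. of_real (q x) * w x * cnj (\<psi>x x))));
             R3 = integral {0..L} (\<lambda>x. dq x * dens \<rho>\<^sub>1 k\<^sub>0 W wx x)
                - (bracket L (\<lambda>x. q x * dens \<rho>\<^sub>1 k\<^sub>0 W wx x)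
                   - bracket L (\<lambda>x. \<kappa> * l^2 * q x * (cmod (w x))^2)
                   - 2 * \<kappa> * l * Re (integral {0..L} (\<lambda>x. of_real (q x) * \<psi> x * cnj (wx x)))
                   - 2 * (\<kappa> + k\<^sub>0) * l * Re (integral {0..L} (\<lambda>x. of_real (q x) * \<phi>x x * cnj (wx x)))
                   + \<kappa> * l^2 * integral {0..L} (\<lambda>x. dq x * (cmod (w x))^2))
         in \<bar>R1\<bar> \<le> C * NU * NF \<and> \<bar>R2\<bar> \<le> C * NU * NF \<and> \<bar>R3\<bar> \<le> C * NU * NF)"
    if h_phi: "H2 L \<phi> \<phi>x \<phi>xx"
      and h_phiL: "\<phi> L = 0"
      and h_psi: "H2 L \<psi> \<psi>x \<psi>xx"
      and h_psiL: "\<psi> L = 0"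
      and h_w: "H2 L w wx wxx"
      and h_wL: "w L = 0"
      and h_Phi: "H1L L \<Phi> \<Phi>x"
      and h_Psi: "H1L L \<Psi> \<Psi>x"
      and h_W: "H1L L W Wx"
      and bc1: "of_real \<kappa> * (\<phi>x 0 + \<psi> 0 + of_real l * w 0) = of_real \<gamma>\<^sub>1 * \<Phi> 0"
      and bc2: "of_real b * \<psi>x 0 = of_real \<gamma>\<^sub>2 * \<Psi> 0"
      and bc3: "of_real k\<^sub>0 * (wx 0 - of_real l * \<phi> 0) = of_real \<gamma>\<^sub>3 * W 0"
      and h_f1: "H1L L f1 f1x"
      and h_f2: "H1L L f2 f2x"
      and h_f3: "H1L L f3 f3x"
      and s4: "sqint L f4"
      and s5: "sqint L f5"
      and s6: "sqint L f6"
      and r1: "(\<forall>x\<in>{0..L}. \<i> * of_real lam * \<phi> x - \<Phi> x = f1 x)"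
      and r2: "(\<forall>x\<in>{0..L}. \<i> * of_real lam * \<psi> x - \<Psi> x = f2 x)"
      and r3: "(\<forall>x\<in>{0..L}. \<i> * of_real lam * w x - W x = f3 x)"
      and e4: "(AE x in lebesgue_on {0..L}.
         \<i> * of_real lam * of_real \<rho>\<^sub>1 * \<Phi> x
         - of_real \<kappa> * (\<phi>xx x + \<psi>x x + of_real l * wx x)
         - of_real k\<^sub>0 * of_real l * (wx x - of_real l * \<phi> x) = of_real \<rho>\<^sub>1 * f4 x)"
      and e5: "(AE x in lebesgue_on {0..L}.
         \<i> * of_real lam * of_real \<rho>\<^sub>2 * \<Psi> x - of_real b * \<psi>xx x
         + of_real \<kappa> * (\<phi>x x + \<psi> x + of_real l * w x) = of_real \<rho>\<^sub>2 * f5 x)"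
      and e6: "(AE x in lebesgue_on {0..L}.
         \<i> * of_real lam * of_real \<rho>\<^sub>1 * W x
         - of_real k\<^sub>0 * (wxx x - of_real l * \<phi>x x)
         + of_real \<kappa> * of_real l * (\<phi>x x + \<psi> x + of_real l * w x) = of_real \<rho>\<^sub>1 * f6 x)"
    for lam :: real and \<phi> \<phi>x \<phi>xx \<psi> \<psi>x \<psi>xx w wx wxx \<Phi> \<Phi>x \<Psi> \<Psi>x W Wx f1 f1x f2 f2x f3 f3x f4 f5 f6 :: "real \<Rightarrow> complex"
  proof -
    have phiB: "H1B L \<phi> \<phi>x" and phixB: "H1B L \<phi>x \<phi>xx" using h_phi unfolding H2_def by (auto intro: H1_H1B)
    have psiB: "H1B L \<psi> \<psi>x" and psixB: "H1B L \<psi>x \<psi>xx" using h_psi unfolding H2_def by (auto intro: H1_H1B)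
    have wB: "H1B L w wx" and wxB: "H1B L wx wxx" using h_w unfolding H2_def by (auto intro: H1_H1B)
    have PhiB: "H1B L \<Phi> \<Phi>x" and PhiL: "\<Phi> L = 0" using h_Phi unfolding H1L_def by (auto intro: H1_H1B)
    have PsiB: "H1B L \<Psi> \<Psi>x" and PsiL: "\<Psi> L = 0" using h_Psi unfolding H1L_def by (auto intro: H1_H1B)
    have WB: "H1B L W Wx" and WL: "W L = 0" using h_W unfolding H1L_def by (auto intro: H1_H1B)
    have f1B: "H1B L f1 f1x" and f1L: "f1 L = 0" using h_f1 unfolding H1L_def by (auto intro: H1_H1B)
    have f2B: "H1B L f2 f2x" and f2L: "f2 L = 0" using h_f2 unfolding H1L_def by (auto intro: H1_H1B)
    have f3B: "H1B L f3 f3x" and f3L: "f3 L = 0" using h_f3 unfolding H1L_def by (auto intro: H1_H1B)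
    have f4L: "L2 L f4" by (rule sqint_L2[OF s4])
    have f5L: "L2 L f5" by (rule sqint_L2[OF s5])
    have f6L: "L2 L f6" by (rule sqint_L2[OF s6])
    have phi2: "L2 L \<phi>" by (rule H1B_L2self[OF phiB])
    have phix2: "L2 L \<phi>x" by (rule H1B_L2[OF phiB])
    have psi2: "L2 L \<psi>" by (rule H1B_L2self[OF psiB])
    have psix2: "L2 L \<psi>x" by (rule H1B_L2[OF psiB])
    have w2: "L2 L w" by (rule H1B_L2self[OF wB])
    have wx2: "L2 L wx" by (rule H1B_L2[OF wB])
    have Phi2: "L2 L \<Phi>" by (rule H1B_L2self[OF PhiB])
    have Psi2: "L2 L \<Psi>" by (rule H1B_L2self[OF PsiB])
    have W2: "L2 L W" by (rule H1B_L2self[OF WB])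
    have f1x2: "L2 L f1x" by (rule H1B_L2[OF f1B])
    have f2x2: "L2 L f2x" by (rule H1B_L2[OF f2B])
    have f3x2: "L2 L f3x" by (rule H1B_L2[OF f3B])
    have NU0: "0 \<le> Hnorm L \<kappa> \<rho>\<^sub>1 b \<rho>\<^sub>2 k\<^sub>0 l \<phi> \<phi>x \<psi> \<psi>x w wx \<Phi> \<Psi> W" by (rule Hnorm_nonneg) (use pos in auto)
    have NF0: "0 \<le> Hnorm L \<kappa> \<rho>\<^sub>1 b \<rho>\<^sub>2 k\<^sub>0 l f1 f1x f2 f2x f3 f3x f4 f5 f6" by (rule Hnorm_nonneg) (use pos in auto)
    have hU: "N2 L \<phi>x \<le> K2 * (Hnorm L \<kappa> \<rho>\<^sub>1 b \<rho>\<^sub>2 k\<^sub>0 l \<phi> \<phi>x \<psi> \<psi>x w wx \<Phi> \<Psi> W)^2 \<and> N2 L \<psi>x \<le> K2 * (Hnorm L \<kappa> \<rho>\<^sub>1 b \<rho>\<^sub>2 k\<^sub>0 l \<phi> \<phi>x \<psi> \<psi>x w wx \<Phi> \<Psi> W)^2 \<and> N2 L wx \<le> K2 * (Hnorm L \<kappa> \<rho>\<^sub>1 b \<rho>\<^sub>2 k\<^sub>0 l \<phi> \<phi>x \<psi> \<psi>x w wx \<Phi> \<Psi> W)^2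
      \<and> N2 L \<Phi> \<le> K2 * (Hnorm L \<kappa> \<rho>\<^sub>1 b \<rho>\<^sub>2 k\<^sub>0 l \<phi> \<phi>x \<psi> \<psi>x w wx \<Phi> \<Psi> W)^2 \<and> N2 L \<Psi> \<le> K2 * (Hnorm L \<kappa> \<rho>\<^sub>1 b \<rho>\<^sub>2 k\<^sub>0 l \<phi> \<phi>x \<psi> \<psi>x w wx \<Phi> \<Psi> W)^2 \<and> N2 L W \<le> K2 * (Hnorm L \<kappa> \<rho>\<^sub>1 b \<rho>\<^sub>2 k\<^sub>0 l \<phi> \<phi>x \<psi> \<psi>x w wx \<Phi> \<Psi> W)^2"
      unfolding K2_def by (rule hnorm_bounds[OF L pos(4,2,5,3,6) phiB psiB wB h_phiL h_psiL h_wL Phi2 Psi2 W2])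
    have hF: "N2 L f1x \<le> K2 * (Hnorm L \<kappa> \<rho>\<^sub>1 b \<rho>\<^sub>2 k\<^sub>0 l f1 f1x f2 f2x f3 f3x f4 f5 f6)^2 \<and> N2 L f2x \<le> K2 * (Hnorm L \<kappa> \<rho>\<^sub>1 b \<rho>\<^sub>2 k\<^sub>0 l f1 f1x f2 f2x f3 f3x f4 f5 f6)^2 \<and> N2 L f3x \<le> K2 * (Hnorm L \<kappa> \<rho>\<^sub>1 b \<rho>\<^sub>2 k\<^sub>0 l f1 f1x f2 f2x f3 f3x f4 f5 f6)^2
      \<and> N2 L f4 \<le> K2 * (Hnorm L \<kappa> \<rho>\<^sub>1 b \<rho>\<^sub>2 k\<^sub>0 l f1 f1x f2 f2x f3 f3x f4 f5 f6)^2 \<and> N2 L f5 \<le> K2 * (Hnorm L \<kappa> \<rho>\<^sub>1 b \<rho>\<^sub>2 k\<^sub>0 l f1 f1x f2 f2x f3 f3x f4 f5 f6)^2 \<and> N2 L f6 \<le> K2 * (Hnorm L \<kappa> \<rho>\<^sub>1 b \<rho>\<^sub>2 k\<^sub>0 l f1 f1x f2 f2x f3 f3x f4 f5 f6)^2"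
      unfolding K2_def by (rule hnorm_bounds[OF L pos(4,2,5,3,6) f1B f2B f3B f1L f2L f3L f4L f5L f6L])
    note sU = sqrt_bound[OF _ NU0 K20] and sF = sqrt_bound[OF _ NF0 K20]
    have trivS: "\<And>x. x \<in> {0..L} \<Longrightarrow> x \<in> {0..L}" by simp
    define G1 where "G1 = (\<lambda>x. - of_real \<kappa> * (\<psi>x x + of_real l * wx x) - of_real k\<^sub>0 * of_real l * (wx x - of_real l * \<phi> x))"
    have G1L2: "L2 L G1" unfolding G1_def by (intro L2_add L2_cmult L2_diff psix2 wx2 phi2)
    have eq1: "AE x in LM L. \<i> * of_real lam * of_real \<rho>\<^sub>1 * \<Phi> x - of_real \<kappa> * \<phi>xx x + G1 x = of_real \<rho>\<^sub>1 * f4 x"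
      using e4 by eventually_elim (simp add: G1_def algebra_simps)
    have r1': "\<And>x. x \<in> {0..L} \<Longrightarrow> \<i> * of_real lam * \<phi> x - \<Phi> x = f1 x" using r1 by blast
    note M1 = multiplier[OF L qB phiB phixB PhiB f1B r1 f4L G1L2 eq1, where m="k\<^sub>0 * l^2"]
    have X1: "Re (integral {0..L} (\<lambda>x. of_real (q x) * (G1 x * cnj (\<phi>x x) - of_real (k\<^sub>0 * l^2) * (\<phi>x x * cnj (\<phi> x)))))
      = (- \<kappa>) * Re (integral {0..L} (\<lambda>x. of_real (q x) * \<psi>x x * cnj (\<phi>x x))) + (- ((\<kappa> + k\<^sub>0) * l)) * Re (integral {0..L} (\<lambda>x. of_real (q x) * wx x * cnj (\<phi>x x)))"
    proof (rule cross)
      show "integrable (LM L) (\<lambda>x. of_real (q x) * \<psi>x x * cnj (\<phi>x x))" by (rule intq2[OF Qm Qb psix2 L2_cnj[OF phix2]])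
      show "integrable (LM L) (\<lambda>x. of_real (q x) * wx x * cnj (\<phi>x x))" by (rule intq2[OF Qm Qb wx2 L2_cnj[OF phix2]])
      show "integrable (LM L) (\<lambda>x. of_real (q x) * (G1 x * cnj (\<phi>x x) - of_real (k\<^sub>0 * l^2) * (\<phi>x x * cnj (\<phi> x))))"
        by (rule int_qdiff[OF Qm Qb G1L2 L2_cnj[OF phix2] phix2 L2_cnj[OF phi2]])
      fix x
      show "Re (of_real (q x) * (G1 x * cnj (\<phi>x x) - of_real (k\<^sub>0 * l^2) * (\<phi>x x * cnj (\<phi> x))))
        = (- \<kappa>) * Re (of_real (q x) * \<psi>x x * cnj (\<phi>x x)) + (- ((\<kappa> + k\<^sub>0) * l)) * Re (of_real (q x) * wx x * cnj (\<phi>x x))"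
        unfolding G1_def by (simp add: algebra_simps power2_eq_square)
    qed
    have R1eq: "integral {0..L} (\<lambda>x. dq x * dens \<rho>\<^sub>1 \<kappa> \<Phi> \<phi>x x)
              - (bracket L (\<lambda>x. q x * dens \<rho>\<^sub>1 \<kappa> \<Phi> \<phi>x x)
                 - bracket L (\<lambda>x. k\<^sub>0 * l^2 * q x * (cmod (\<phi> x))^2)
                 + 2 * \<kappa> * Re (integral {0..L} (\<lambda>x. of_real (q x) * \<psi>x x * cnj (\<phi>x x)))
                 + k\<^sub>0 * l^2 * integral {0..L} (\<lambda>x. dq x * (cmod (\<phi> x))^2)
                 + 2 * (\<kappa> + k\<^sub>0) * l * Re (integral {0..L} (\<lambda>x. of_real (q x) * wx x * cnj (\<phi>x x)))) = 2 * \<rho>\<^sub>1 * Re (integral {0..L} (\<lambda>x. of_real (q x) * (\<Phi> x * cnj (f1x x) + f4 x * cnj (\<phi>x x))))"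
      using M1 X1 by argo
    have B1: "\<bar>integral {0..L} (\<lambda>x. dq x * dens \<rho>\<^sub>1 \<kappa> \<Phi> \<phi>x x)
              - (bracket L (\<lambda>x. q x * dens \<rho>\<^sub>1 \<kappa> \<Phi> \<phi>x x)
                 - bracket L (\<lambda>x. k\<^sub>0 * l^2 * q x * (cmod (\<phi> x))^2)
                 + 2 * \<kappa> * Re (integral {0..L} (\<lambda>x. of_real (q x) * \<psi>x x * cnj (\<phi>x x)))
                 + k\<^sub>0 * l^2 * integral {0..L} (\<lambda>x. dq x * (cmod (\<phi> x))^2)
                 + 2 * (\<kappa> + k\<^sub>0) * l * Re (integral {0..L} (\<lambda>x. of_real (q x) * wx x * cnj (\<phi>x x))))\<bar> \<le> C * (Hnorm L \<kappa> \<rho>\<^sub>1 b \<rho>\<^sub>2 k\<^sub>0 l \<phi> \<phi>x \<psi> \<psi>x w wx \<Phi> \<Psi> W) * (Hnorm L \<kappa> \<rho>\<^sub>1 b \<rho>\<^sub>2 k\<^sub>0 l f1 f1x f2 f2x f3 f3x f4 f5 f6)"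
      unfolding R1eq
      by (rule final_arith[OF rem_bound[OF L qB Phi2 f1x2 f4L phix2, of \<rho>\<^sub>1, folded Bq_def]])
         (use pos Bq0 NU0 NF0 Cge1 hU hF sU sF in \<open>auto simp: N2_nonneg\<close>)
    define G2 where "G2 = (\<lambda>x. of_real \<kappa> * (\<phi>x x + \<psi> x + of_real l * w x))"
    have G2L2: "L2 L G2" unfolding G2_def by (intro L2_add L2_cmult phix2 psi2 w2)
    have eq2: "AE x in LM L. \<i> * of_real lam * of_real \<rho>\<^sub>2 * \<Psi> x - of_real b * \<psi>xx x + G2 x = of_real \<rho>\<^sub>2 * f5 x"
      using e5 by eventually_elim (simp add: G2_def algebra_simps)
    have r2': "\<And>x. x \<in> {0..L} \<Longrightarrow> \<i> * of_real lam * \<psi> x - \<Psi> x = f2 x" using r2 by blast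
    note M2 = multiplier[OF L qB psiB psixB PsiB f2B r2 f5L G2L2 eq2, where m="\<kappa>"]
    have X2: "Re (integral {0..L} (\<lambda>x. of_real (q x) * (G2 x * cnj (\<psi>x x) - of_real \<kappa> * (\<psi>x x * cnj (\<psi> x)))))
      = \<kappa> * Re (integral {0..L} (\<lambda>x. of_real (q x) * \<phi>x x * cnj (\<psi>x x))) + (\<kappa> * l) * Re (integral {0..L} (\<lambda>x. of_real (q x) * w x * cnj (\<psi>x x)))"
    proof (rule cross)
      show "integrable (LM L) (\<lambda>x. of_real (q x) * \<phi>x x * cnj (\<psi>x x))" by (rule intq2[OF Qm Qb phix2 L2_cnj[OF psix2]])
      show "integrable (LM L) (\<lambda>x. of_real (q x) * w x * cnj (\<psi>x x))" by (rule intq2[OF Qm Qb w2 L2_cnj[OF psix2]])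
      show "integrable (LM L) (\<lambda>x. of_real (q x) * (G2 x * cnj (\<psi>x x) - of_real \<kappa> * (\<psi>x x * cnj (\<psi> x))))"
        by (rule int_qdiff[OF Qm Qb G2L2 L2_cnj[OF psix2] psix2 L2_cnj[OF psi2]])
      fix x
      show "Re (of_real (q x) * (G2 x * cnj (\<psi>x x) - of_real \<kappa> * (\<psi>x x * cnj (\<psi> x))))
        = \<kappa> * Re (of_real (q x) * \<phi>x x * cnj (\<psi>x x)) + (\<kappa> * l) * Re (of_real (q x) * w x * cnj (\<psi>x x))"
        unfolding G2_def by (simp add: algebra_simps power2_eq_square)
    qed
    have R2eq: "integral {0..L} (\<lambda>x. dq x * dens \<rho>\<^sub>2 b \<Psi> \<psi>x x)
              - (bracket L (\<lambda>x. q x * dens \<rho>\<^sub>2 b \<Psi> \<psi>x x)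
                 - bracket L (\<lambda>x. \<kappa> * q x * (cmod (\<psi> x))^2)
                 - 2 * \<kappa> * Re (integral {0..L} (\<lambda>x. of_real (q x) * \<phi>x x * cnj (\<psi>x x)))
                 + \<kappa> * integral {0..L} (\<lambda>x. dq x * (cmod (\<psi> x))^2)
                 - 2 * \<kappa> * l * Re (integral {0..L} (\<lambda>x. of_real (q x) * w x * cnj (\<psi>x x)))) = 2 * \<rho>\<^sub>2 * Re (integral {0..L} (\<lambda>x. of_real (q x) * (\<Psi> x * cnj (f2x x) + f5 x * cnj (\<psi>x x))))"
      using M2 X2 by argo
    have B2: "\<bar>integral {0..L} (\<lambda>x. dq x * dens \<rho>\<^sub>2 b \<Psi> \<psi>x x)
              - (bracket L (\<lambda>x. q x * dens \<rho>\<^sub>2 b \<Psi> \<psi>x x)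
                 - bracket L (\<lambda>x. \<kappa> * q x * (cmod (\<psi> x))^2)
                 - 2 * \<kappa> * Re (integral {0..L} (\<lambda>x. of_real (q x) * \<phi>x x * cnj (\<psi>x x)))
                 + \<kappa> * integral {0..L} (\<lambda>x. dq x * (cmod (\<psi> x))^2)
                 - 2 * \<kappa> * l * Re (integral {0..L} (\<lambda>x. of_real (q x) * w x * cnj (\<psi>x x))))\<bar> \<le> C * (Hnorm L \<kappa> \<rho>\<^sub>1 b \<rho>\<^sub>2 k\<^sub>0 l \<phi> \<phi>x \<psi> \<psi>x w wx \<Phi> \<Psi> W) * (Hnorm L \<kappa> \<rho>\<^sub>1 b \<rho>\<^sub>2 k\<^sub>0 l f1 f1x f2 f2x f3 f3x f4 f5 f6)"
      unfolding R2eq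
      by (rule final_arith[OF rem_bound[OF L qB Psi2 f2x2 f5L psix2, of \<rho>\<^sub>2, folded Bq_def]])
         (use pos Bq0 NU0 NF0 Cge2 hU hF sU sF in \<open>auto simp: N2_nonneg\<close>)
    define G3 where "G3 = (\<lambda>x. of_real k\<^sub>0 * of_real l * \<phi>x x + of_real \<kappa> * of_real l * (\<phi>x x + \<psi> x + of_real l * w x))"
    have G3L2: "L2 L G3" unfolding G3_def by (intro L2_add L2_cmult phix2 psi2 w2)
    have eq3: "AE x in LM L. \<i> * of_real lam * of_real \<rho>\<^sub>1 * W x - of_real k\<^sub>0 * wxx x + G3 x = of_real \<rho>\<^sub>1 * f6 x"
      using e6 by eventually_elim (simp add: G3_def algebra_simps)
    have r3': "\<And>x. x \<in> {0..L} \<Longrightarrow> \<i> * of_real lam * w x - W x = f3 x" using r3 by blast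
    note M3 = multiplier[OF L qB wB wxB WB f3B r3 f6L G3L2 eq3, where m="\<kappa> * l^2"]
    have X3: "Re (integral {0..L} (\<lambda>x. of_real (q x) * (G3 x * cnj (wx x) - of_real (\<kappa> * l^2) * (wx x * cnj (w x)))))
      = (\<kappa> * l) * Re (integral {0..L} (\<lambda>x. of_real (q x) * \<psi> x * cnj (wx x))) + ((\<kappa> + k\<^sub>0) * l) * Re (integral {0..L} (\<lambda>x. of_real (q x) * \<phi>x x * cnj (wx x)))"
    proof (rule cross)
      show "integrable (LM L) (\<lambda>x. of_real (q x) * \<psi> x * cnj (wx x))" by (rule intq2[OF Qm Qb psi2 L2_cnj[OF wx2]])
      show "integrable (LM L) (\<lambda>x. of_real (q x) * \<phi>x x * cnj (wx x))" by (rule intq2[OF Qm Qb phix2 L2_cnj[OF wx2]])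
      show "integrable (LM L) (\<lambda>x. of_real (q x) * (G3 x * cnj (wx x) - of_real (\<kappa> * l^2) * (wx x * cnj (w x))))"
        by (rule int_qdiff[OF Qm Qb G3L2 L2_cnj[OF wx2] wx2 L2_cnj[OF w2]])
      fix x
      show "Re (of_real (q x) * (G3 x * cnj (wx x) - of_real (\<kappa> * l^2) * (wx x * cnj (w x))))
        = (\<kappa> * l) * Re (of_real (q x) * \<psi> x * cnj (wx x)) + ((\<kappa> + k\<^sub>0) * l) * Re (of_real (q x) * \<phi>x x * cnj (wx x))"
        unfolding G3_def by (simp add: algebra_simps power2_eq_square)
    qed
    have R3eq: "integral {0..L} (\<lambda>x. dq x * dens \<rho>\<^sub>1 k\<^sub>0 W wx x)
              - (bracket L (\<lambda>x. q x * dens \<rho>\<^sub>1 k\<^sub>0 W wx x)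
                 - bracket L (\<lambda>x. \<kappa> * l^2 * q x * (cmod (w x))^2)
                 - 2 * \<kappa> * l * Re (integral {0..L} (\<lambda>x. of_real (q x) * \<psi> x * cnj (wx x)))
                 - 2 * (\<kappa> + k\<^sub>0) * l * Re (integral {0..L} (\<lambda>x. of_real (q x) * \<phi>x x * cnj (wx x)))
                 + \<kappa> * l^2 * integral {0..L} (\<lambda>x. dq x * (cmod (w x))^2)) = 2 * \<rho>\<^sub>1 * Re (integral {0..L} (\<lambda>x. of_real (q x) * (W x * cnj (f3x x) + f6 x * cnj (wx x))))"
      using M3 X3 by argo
    have B3: "\<bar>integral {0..L} (\<lambda>x. dq x * dens \<rho>\<^sub>1 k\<^sub>0 W wx x)
              - (bracket L (\<lambda>x. q x * dens \<rho>\<^sub>1 k\<^sub>0 W wx x)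
                 - bracket L (\<lambda>x. \<kappa> * l^2 * q x * (cmod (w x))^2)
                 - 2 * \<kappa> * l * Re (integral {0..L} (\<lambda>x. of_real (q x) * \<psi> x * cnj (wx x)))
                 - 2 * (\<kappa> + k\<^sub>0) * l * Re (integral {0..L} (\<lambda>x. of_real (q x) * \<phi>x x * cnj (wx x)))
                 + \<kappa> * l^2 * integral {0..L} (\<lambda>x. dq x * (cmod (w x))^2))\<bar> \<le> C * (Hnorm L \<kappa> \<rho>\<^sub>1 b \<rho>\<^sub>2 k\<^sub>0 l \<phi> \<phi>x \<psi> \<psi>x w wx \<Phi> \<Psi> W) * (Hnorm L \<kappa> \<rho>\<^sub>1 b \<rho>\<^sub>2 k\<^sub>0 l f1 f1x f2 f2x f3 f3x f4 f5 f6)"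
      unfolding R3eq
      by (rule final_arith[OF rem_bound[OF L qB W2 f3x2 f6L wx2, of \<rho>\<^sub>1, folded Bq_def]])
         (use pos Bq0 NU0 NF0 Cge1 hU hF sU sF in \<open>auto simp: N2_nonneg\<close>)
    show ?thesis unfolding Let_def using B1 B2 B3 by blast
  qed
  show ?thesis
  proof (intro exI[of _ C] conjI allI impI)
    show "0 < C" by (rule C0)
  next
    fix lam :: real and \<phi> \<phi>x \<phi>xx \<psi> \<psi>x \<psi>xx w wx wxx \<Phi> \<Phi>x \<Psi> \<Psi>x W Wx f1 f1x f2 f2x f3 f3x f4 f5 f6 :: "real \<Rightarrow> complex"
    assume A: "H2 L \<phi> \<phi>x \<phi>xx \<and> \<phi> L = 0 \<and> H2 L \<psi> \<psi>x \<psi>xx \<and> \<psi> L = 0 \<and> H2 L w wx wxx \<and> w L = 0 \<and>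
      H1L L \<Phi> \<Phi>x \<and> H1L L \<Psi> \<Psi>x \<and> H1L L W Wx \<and>
      of_real \<kappa> * (\<phi>x 0 + \<psi> 0 + of_real l * w 0) = of_real \<gamma>\<^sub>1 * \<Phi> 0 \<and>
      of_real b * \<psi>x 0 = of_real \<gamma>\<^sub>2 * \<Psi> 0 \<and>
      of_real k\<^sub>0 * (wx 0 - of_real l * \<phi> 0) = of_real \<gamma>\<^sub>3 * W 0 \<and>
      H1L L f1 f1x \<and> H1L L f2 f2x \<and> H1L L f3 f3x \<and> sqint L f4 \<and> sqint L f5 \<and> sqint L f6 \<and>
      (\<forall>x\<in>{0..L}. \<i> * of_real lam * \<phi> x - \<Phi> x = f1 x) \<and>
      (\<forall>x\<in>{0..L}. \<i> * of_real lam * \<psi> x - \<Psi> x = f2 x) \<and>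
      (\<forall>x\<in>{0..L}. \<i> * of_real lam * w x - W x = f3 x) \<and>
      (AE x in lebesgue_on {0..L}.
         \<i> * of_real lam * of_real \<rho>\<^sub>1 * \<Phi> x
         - of_real \<kappa> * (\<phi>xx x + \<psi>x x + of_real l * wx x)
         - of_real k\<^sub>0 * of_real l * (wx x - of_real l * \<phi> x) = of_real \<rho>\<^sub>1 * f4 x) \<and>
      (AE x in lebesgue_on {0..L}.
         \<i> * of_real lam * of_real \<rho>\<^sub>2 * \<Psi> x - of_real b * \<psi>xx x
         + of_real \<kappa> * (\<phi>x x + \<psi> x + of_real l * w x) = of_real \<rho>\<^sub>2 * f5 x) \<and>
      (AE x in lebesgue_on {0..L}.
         \<i> * of_real lam * of_real \<rho>\<^sub>1 * W x
         - of_real k\<^sub>0 * (wxx x - of_real l * \<phi>x x)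
         + of_real \<kappa> * of_real l * (\<phi>x x + \<psi> x + of_real l * w x) = of_real \<rho>\<^sub>1 * f6 x)"
    show "(let NU = Hnorm L \<kappa> \<rho>\<^sub>1 b \<rho>\<^sub>2 k\<^sub>0 l \<phi> \<phi>x \<psi> \<psi>x w wx \<Phi> \<Psi> W;
           NF = Hnorm L \<kappa> \<rho>\<^sub>1 b \<rho>\<^sub>2 k\<^sub>0 l f1 f1x f2 f2x f3 f3x f4 f5 f6;
           R1 = integral {0..L} (\<lambda>x. dq x * dens \<rho>\<^sub>1 \<kappa> \<Phi> \<phi>x x)
              - (bracket L (\<lambda>x. q x * dens \<rho>\<^sub>1 \<kappa> \<Phi> \<phi>x x)
                 - bracket L (\<lambda>x. k\<^sub>0 * l^2 * q x * (cmod (\<phi> x))^2)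
                 + 2 * \<kappa> * Re (integral {0..L} (\<lambda>x. of_real (q x) * \<psi>x x * cnj (\<phi>x x)))
                 + k\<^sub>0 * l^2 * integral {0..L} (\<lambda>x. dq x * (cmod (\<phi> x))^2)
                 + 2 * (\<kappa> + k\<^sub>0) * l * Re (integral {0..L} (\<lambda>x. of_real (q x) * wx x * cnj (\<phi>x x))));
           R2 = integral {0..L} (\<lambda>x. dq x * dens \<rho>\<^sub>2 b \<Psi> \<psi>x x)
              - (bracket L (\<lambda>x. q x * dens \<rho>\<^sub>2 b \<Psi> \<psi>x x)
                 - bracket L (\<lambda>x. \<kappa> * q x * (cmod (\<psi> x))^2)
                 - 2 * \<kappa> * Re (integral {0..L} (\<lambda>x. of_real (q x) * \<phi>x x * cnj (\<psi>x x)))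
                 + \<kappa> * integral {0..L} (\<lambda>x. dq x * (cmod (\<psi> x))^2)
                 - 2 * \<kappa> * l * Re (integral {0..L} (\<lambda>x. of_real (q x) * w x * cnj (\<psi>x x))));
           R3 = integral {0..L} (\<lambda>x. dq x * dens \<rho>\<^sub>1 k\<^sub>0 W wx x)
              - (bracket L (\<lambda>x. q x * dens \<rho>\<^sub>1 k\<^sub>0 W wx x)
                 - bracket L (\<lambda>x. \<kappa> * l^2 * q x * (cmod (w x))^2)
                 - 2 * \<kappa> * l * Re (integral {0..L} (\<lambda>x. of_real (q x) * \<psi> x * cnj (wx x)))
                 - 2 * (\<kappa> + k\<^sub>0) * l * Re (integral {0..L} (\<lambda>x. of_real (q x) * \<phi>x x * cnj (wx x)))
                 + \<kappa> * l^2 * integral {0..L} (\<lambda>x. dq x * (cmod (w x))^2))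
       in \<bar>R1\<bar> \<le> C * NU * NF \<and> \<bar>R2\<bar> \<le> C * NU * NF \<and> \<bar>R3\<bar> \<le> C * NU * NF)"
      apply (rule main)
      using A apply blast+
      done
  qed
qed

end
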